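(* Let $k\ge2$ be an integer, $X>0$ and $\beta\in\mathbb R$. For all integers $q>2$ and all integers $a$ with $(a,q)=1$, $$\left|\Re\left(\frac{S_k^*(q,a)}{(1-2\pi i\beta X)^{1/k}}\right)\right|\le(1-\delta_k)\varphi(q),$$ where $\delta_k=\frac{\pi^2}{2^{2k+3}C_k^{2k}}$ and $C_k=128$ if $k=2$, $C_k=\prod_{p\le k^6}k$ (product over primes $p\le k^6$) if $k\ge3$.
   Context: $S_k^*(q,a)=\sum_{1\le\ell\le q,\,(\ell,q)=1}e(a\ell^k/q)$ with $e(\alpha)=e^{2\pi i\alpha}$; $\varphi$ is Euler's totient; $(1-2\pi i\beta X)^{1/k}$ uses the principal branch. *)

theory Defs
  imports "HOL-Analysis.Analysis" "HOL-Number_Theory.Number_Theory"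
begin

definition Sstar :: "nat \<Rightarrow> nat \<Rightarrow> int \<Rightarrow> complex" where
  "Sstar k q a = (\<Sum>l\<in>{l\<in>{1..q}. coprime l q}.
      exp (2 * pi * \<i> * of_real (of_int (a * int l ^ k) / real q)))"

definition Ck :: "nat \<Rightarrow> real" where
  "Ck k = (if k = 2 then 128 else (\<Prod>p\<in>{p::nat. prime p \<and> p \<le> k ^ 6}. real k))"

definition delta_k :: "nat \<Rightarrow> real" where
  "delta_k k = pi ^ 2 / (2 ^ (2 * k + 3) * Ck k ^ (2 * k))"

end

theory Submission
  imports Defs
begin


definition ee :: "int \<Rightarrow> nat \<Rightarrow> complex" where
  "ee y m = exp (complex_of_real (2 * pi) * \<i> * complex_of_real (real_of_int y / real m))"

lemma ee_add: "ee (x + y) m = ee x m * ee y m"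
  unfolding ee_def by (simp add: add_divide_distrib distrib_left exp_add)

lemma norm_ee [simp]: "norm (ee y m) = 1"
  unfolding ee_def by (simp add: norm_exp)

lemma ee_multiple: "m > 0 \<Longrightarrow> ee (int m * t) m = 1"
proof -
  assume m: "m > 0"
  have "complex_of_real (2 * pi) * \<i> * complex_of_real (real_of_int (int m * t) / real m)
        = \<i> * (of_int t * (of_real pi * 2))" using m by (simp add: field_simps)
  then show ?thesis unfolding ee_def by (metis add_0 exp_plus_2pin exp_zero)
qed

lemma ee_cong: assumes "m > 0" "[x = y] (mod int m)" shows "ee x m = ee y m"
proof -
  obtain t where "x = y + int m * t"
    using assms(2) by (metis cong_iff_lin cong_sym)
  then show ?thesis using ee_add ee_multiple[OF assms(1)] by simp
qed

lemma ee_mod: "m > 0 \<Longrightarrow> ee (x mod int m) m = ee x m"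
  by (intro ee_cong) (auto simp: cong_def)

lemma ee_scale: "d > 0 \<Longrightarrow> ee (x * int d) (m * d) = ee x m"
  unfolding ee_def by simp

lemma Re_ee: "Re (ee y m) = cos (2 * pi * real_of_int y / real m)"
  unfolding ee_def by (simp add: Re_exp)

lemma ee_cis: "ee y m = cis (2*pi*real_of_int y / real m)"
  unfolding ee_def cis_conv_exp by (intro arg_cong[where f=exp]) simp


lemma main_repr:
  fixes z :: complex and k :: nat
  assumes "Re z = 1" "k > 0"
  obtains W \<psi> where
    "\<And>x. Re (exp (complex_of_real (2*pi) * \<i> * complex_of_real x) / z powr (1 / of_nat k))
          = W * cos (2*pi*x - \<psi>)"
    "0 < W" "W \<le> 1" "W ^ k = cos (real k * \<psi>)" "\<bar>real k * \<psi>\<bar> < pi/2"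
proof -
  have z0: "z \<noteq> 0" using assms(1) by auto
  define L where "L = Ln z"
  have zL: "z = exp L" using z0 by (simp add: L_def exp_Ln)
  have cosL: "exp (Re L) * cos (Im L) = 1"
    using assms(1) zL by (metis Re_exp)
  have cosL': "cos (Im L) = exp (- Re L)"
    using cosL by (simp add: exp_minus field_simps)
  have ImL: "\<bar>Im L\<bar> < pi/2" using assms(1) Re_Ln_pos_lt_imp[of z] by (simp add: L_def)
  have ReL: "Re L \<ge> 0"
  proof -
    have "exp (- Re L) \<le> 1" using cosL' by (metis cos_le_one)
    then show ?thesis by simp
  qed
  define W where "W = exp (- Re L / real k)"
  define \<psi> where "\<psi> = Im L / real k"
  have pw: "z powr (1 / of_nat k) = exp (L / of_nat k)"
    using z0 by (simp add: powr_def L_def)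
  show ?thesis
  proof
    fix x :: real
    have "exp (complex_of_real (2*pi) * \<i> * complex_of_real x) / z powr (1 / of_nat k)
          = exp (complex_of_real (2*pi) * \<i> * complex_of_real x - L / of_nat k)"
      by (simp add: pw exp_diff)
    also have "Re \<dots> = exp (- Re L / real k) * cos (2*pi*x - Im L / real k)"
      by (simp add: Re_exp)
    finally show "Re (exp (complex_of_real (2*pi) * \<i> * complex_of_real x) / z powr (1 / of_nat k))
          = W * cos (2*pi*x - \<psi>)" by (simp add: W_def \<psi>_def)
  next
    show "0 < W" by (simp add: W_def)
    show "W \<le> 1" using ReL assms(2) by (simp add: W_def)
    show "W ^ k = cos (real k * \<psi>)"
      using assms(2) cosL' exp_divide_power_eq[of k "- Re L"] by (simp add: W_def \<psi>_def)
    show "\<bar>real k * \<psi>\<bar> < pi/2" using assms(2) ImL by (simp add: \<psi>_def)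
  qed
qed


lemma sin_half:
  fixes y :: real assumes "0 \<le> y" "y \<le> pi/2"
  shows "sin y \<ge> y / 2"
proof -
  have b: "\<bar>sin y - (\<Sum>m<3. sin_coeff m * y ^ m)\<bar> \<le> inverse (fact 3) * \<bar>y\<bar> ^ 3"
    by (rule Maclaurin_sin_bound)
  have s3: "(\<Sum>m<3. sin_coeff m * y ^ m) = y"
    by (simp add: numeral_3_eq_3 sin_coeff_def)
  have "pi \<le> 3.1415926535899" by (rule pi_approx(2))
  then have y2: "y^2 \<le> 3"
  proof -
    have "y^2 \<le> (pi/2)^2" using assms by (intro power_mono) auto
    also have "\<dots> \<le> (1.6::real)^2" using \<open>pi \<le> 3.1415926535899\<close> pi_gt3
      by (intro power_mono) auto
    also have "\<dots> \<le> 3" by (simp add: power2_eq_square)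
    finally show ?thesis .
  qed
  have "inverse (fact 3) * \<bar>y\<bar> ^ 3 = y * y^2 / 6" using assms
    by (simp add: fact_numeral power3_eq_cube power2_eq_square field_simps)
  also have "\<dots> \<le> y * 3 / 6" using y2 assms by (intro divide_right_mono mult_left_mono) auto
  finally show ?thesis using b s3 by auto
qed

lemma sin_J:
  fixes x p :: real assumes "0 \<le> x" "x \<le> p" "p > 0"
  shows "sin (pi * x / p) \<ge> 3 * min x (p - x) / (2 * p)"
proof (cases "2 * x \<le> p")
  case True
  have "sin (pi * x / p) \<ge> pi * x / p / 2"
    using True assms by (intro sin_half) (auto simp: field_simps)
  moreover have "pi * x / p / 2 \<ge> 3 * x / (2 * p)"
  proof -
    have "3 * x \<le> pi * x" using pi_gt3 assms by (intro mult_right_mono) auto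
    then have "3 * x / (2 * p) \<le> pi * x / (2 * p)" using assms by (intro divide_right_mono) auto
    then show ?thesis by simp
  qed
  moreover have "3 * min x (p - x) / (2 * p) \<le> 3 * x / (2 * p)"
    using assms by (intro divide_right_mono mult_left_mono) auto
  ultimately show ?thesis by linarith
next
  case False
  have eq: "sin (pi * x / p) = sin (pi * (p - x) / p)"
  proof -
    have "pi * (p - x) / p = pi - pi * x / p" using assms by (simp add: field_simps)
    then show ?thesis by simp
  qed
  have "sin (pi * (p - x) / p) \<ge> pi * (p - x) / p / 2"
    using False assms by (intro sin_half) (auto simp: field_simps)
  moreover have "pi * (p - x) / p / 2 \<ge> 3 * (p - x) / (2 * p)"
  proof -
    have "3 * (p - x) \<le> pi * (p - x)" using pi_gt3 assms by (intro mult_right_mono) auto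
    then have "3 * (p - x) / (2 * p) \<le> pi * (p - x) / (2 * p)" using assms by (intro divide_right_mono) auto
    then show ?thesis by simp
  qed
  moreover have "3 * min x (p - x) / (2 * p) \<le> 3 * (p - x) / (2 * p)"
    using assms by (intro divide_right_mono mult_left_mono) auto
  ultimately show ?thesis using eq by linarith
qed

lemma abs_sin_add_int_pi: "\<bar>sin (x + pi * of_int m)\<bar> = \<bar>sin x\<bar>"
  by (simp add: sin_add)

lemma sin_lower:
  assumes "M > 0" "\<not> int M dvd n"
  shows "\<bar>sin (pi * real_of_int n / real M)\<bar> \<ge> 3 / (2 * real M)"
proof -
  define r where "r = n mod int M"
  have r0: "0 < r" using assms by (simp add: r_def dvd_eq_mod_eq_0[symmetric] order_le_neq_trans)
  have rM: "r < int M" using assms by (simp add: r_def)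
  have n: "n = int M * (n div int M) + r" by (simp add: r_def)
  have "pi * real_of_int n / real M = pi * real_of_int r / real M + pi * of_int (n div int M)"
    using assms by (subst n) (simp add: field_simps)
  then have e: "\<bar>sin (pi * real_of_int n / real M)\<bar> = \<bar>sin (pi * real_of_int r / real M)\<bar>"
    by (simp add: abs_sin_add_int_pi)
  have m1: "min (real_of_int r) (real M - real_of_int r) \<ge> 1" using r0 rM by linarith
  have "sin (pi * real_of_int r / real M) \<ge> 3 * min (real_of_int r) (real M - real_of_int r) / (2 * real M)"
    using r0 rM assms by (intro sin_J) auto
  moreover have "3 * min (real_of_int r) (real M - real_of_int r) / (2 * real M) \<ge> 3 / (2 * real M)"
    using m1 assms by (intro divide_right_mono) auto
  ultimately show ?thesis using e by linarith
qed


lemma abs_cos_le: "\<bar>cos x\<bar> \<le> 1 - (sin x)^2 / 2" for x :: real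
proof -
  have "\<bar>cos x\<bar>^2 = 1 - (sin x)^2" by (simp only: power2_abs cos_squared_eq)
  also have "\<dots> \<le> (1 - (sin x)^2 / 2)^2"
  proof -
    have "0 \<le> ((sin x)^2)^2" by simp
    then show ?thesis by (simp add: power2_eq_square algebra_simps)
  qed
  finally have "\<bar>cos x\<bar>^2 \<le> (1 - (sin x)^2 / 2)^2" .
  moreover have "0 \<le> 1 - (sin x)^2 / 2"
  proof -
    have "(sin x)^2 \<le> 1" by (simp add: abs_square_le_1 abs_sin_le_one)
    then show ?thesis by linarith
  qed
  ultimately show ?thesis by (rule power2_le_imp_le)
qed

lemma abs_sin_mono:
  fixes x y :: real assumes "\<bar>x\<bar> \<le> \<bar>y\<bar>" "\<bar>y\<bar> \<le> pi/2"
  shows "\<bar>sin x\<bar> \<le> \<bar>sin y\<bar>"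
proof -
  have gen: "\<bar>sin t\<bar> = sin \<bar>t\<bar>" if "\<bar>t\<bar> \<le> pi" for t :: real
  proof (cases "t \<ge> 0")
    case True then show ?thesis using that sin_ge_zero[of t] by simp
  next
    case False then show ?thesis using that sin_ge_zero[of "-t"] by simp
  qed
  have ax: "\<bar>sin x\<bar> = sin \<bar>x\<bar>" using assms pi_gt_zero by (intro gen) linarith
  have ay: "\<bar>sin y\<bar> = sin \<bar>y\<bar>" using assms pi_gt_zero by (intro gen) linarith
  have "sin \<bar>x\<bar> \<le> sin \<bar>y\<bar>" using assms
    by (subst sin_mono_le_eq) auto
  then show ?thesis using ax ay by simp
qed

lemma caseA_trig:
  fixes W \<psi> \<alpha> :: real and k q :: nat
  assumes k: "k \<ge> 1" and q: "q \<ge> 3" and W0: "0 < W" and W1: "W \<le> 1"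
      and Wk: "W ^ k = cos (real k * \<psi>)"
      and kpsi: "\<bar>real k * \<psi>\<bar> < pi/2" and sa: "\<bar>sin \<alpha>\<bar> \<ge> 3 / (2 * real q)"
  shows "W * \<bar>cos (\<alpha> - \<psi>)\<bar> \<le> 1 - 1 / (32 * real k * real q ^ 2)"
proof -
  have qpos: "real q > 0" using q by simp
  have psi_le: "\<bar>\<psi>\<bar> \<le> \<bar>real k * \<psi>\<bar>" using k by (simp add: abs_mult mult_le_cancel_right1)
  have small: "1 / (32 * real k * real q ^ 2) \<le> 1 / (2 * real q ^ 2)"
    using k q by (intro divide_left_mono mult_right_mono) auto
  show ?thesis
  proof (cases "\<bar>sin \<psi>\<bar> \<ge> 1 / (4 * real q)")
    case True
    define y where "y = 1 / (16 * real q ^ 2)"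
    have "(1::real) \<le> real q ^ 2" using q by (intro one_le_power) simp
    then have "1 \<le> 16 * real q ^ 2" by linarith
    then have y0: "0 \<le> y" "y \<le> 1" by (auto simp: y_def divide_le_eq_1)
    have "\<bar>sin \<psi>\<bar> \<le> \<bar>sin (real k * \<psi>)\<bar>"
      using psi_le kpsi by (intro abs_sin_mono) auto
    then have "\<bar>1 / (4 * real q)\<bar> \<le> \<bar>sin (real k * \<psi>)\<bar>" using True by simp
    then have "(1 / (4 * real q))^2 \<le> (sin (real k * \<psi>))^2"
      by (simp only: abs_le_square_iff)
    then have sk: "y \<le> (sin (real k * \<psi>))^2" by (simp add: y_def power2_eq_square)
    have "W ^ (2*k) = (W ^ k)^2" by (simp add: power_mult[symmetric] mult.commute)
    also have "\<dots> = (cos (real k * \<psi>))^2" by (simp only: Wk)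
    also have "\<dots> = 1 - (sin (real k * \<psi>))^2" by (simp add: cos_squared_eq)
    finally have W2k: "W ^ (2*k) \<le> 1 - y" using sk by linarith
    have Wb: "W \<le> 1 - y / (2 * real k)"
    proof (rule ccontr)
      assume "\<not> ?thesis"
      then have lt: "1 - y / (2 * real k) < W" by simp
      have nn: "0 \<le> 1 - y / (2 * real k)" using y0 k by (simp add: field_simps)
      have "1 - y = 1 + real (2*k) * (- (y / (2 * real k)))" using k by simp
      also have "\<dots> \<le> (1 + (- (y / (2 * real k)))) ^ (2*k)"
        using y0 k by (intro Bernoulli_inequality) (simp add: field_simps)
      also have "\<dots> < W ^ (2*k)" using lt nn k by (intro power_strict_mono) auto
      finally show False using W2k by simp
    qed
    have "y / (2 * real k) = 1 / (32 * real k * real q ^ 2)" by (simp add: y_def)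
    then have "W \<le> 1 - 1 / (32 * real k * real q ^ 2)" using Wb by simp
    moreover have "W * \<bar>cos (\<alpha> - \<psi>)\<bar> \<le> W" using W0 by (simp add: mult_left_le)
    ultimately show ?thesis by linarith
  next
    case False
    define s where "s = \<bar>sin \<psi>\<bar>"
    have s: "s < 1 / (4 * real q)" "0 \<le> s" using False by (auto simp: s_def)
    have cpos: "cos \<psi> \<ge> 0" using psi_le kpsi by (intro cos_ge_zero) auto
    have "(cos \<psi>)^2 = 1 - s^2" by (simp add: s_def cos_squared_eq)
    moreover have "s^2 \<le> (1 / (4 * real q))^2" using s by (intro power_mono) auto
    moreover have "(1 / (4 * real q))^2 \<le> 1 / 144"
    proof -
      have "1 / (4 * real q) \<le> 1 / 12" using q by (simp add: field_simps)
      then have "(1 / (4 * real q))^2 \<le> (1/12)^2" by (intro power_mono) auto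
      then show ?thesis by (simp add: power2_eq_square)
    qed
    ultimately have c2: "(cos \<psi>)^2 \<ge> 143/144" by linarith
    have "cos \<psi> \<ge> (cos \<psi>)^2" using cpos cos_le_one[of \<psi>] by (simp add: power2_eq_square mult_left_le_one_le)
    then have c: "cos \<psi> \<ge> 143/144" using c2 by linarith
    have "sin (\<alpha> - \<psi>) = sin \<alpha> * cos \<psi> - cos \<alpha> * sin \<psi>" by (simp add: sin_diff)
    then have "\<bar>sin (\<alpha> - \<psi>)\<bar> \<ge> \<bar>sin \<alpha>\<bar> * cos \<psi> - \<bar>cos \<alpha>\<bar> * s"
    proof -
      have "\<bar>sin \<alpha> * cos \<psi> - cos \<alpha> * sin \<psi>\<bar> \<ge> \<bar>sin \<alpha> * cos \<psi>\<bar> - \<bar>cos \<alpha> * sin \<psi>\<bar>"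
        by (rule abs_triangle_ineq2)
      moreover have "\<bar>sin \<alpha> * cos \<psi>\<bar> = \<bar>sin \<alpha>\<bar> * cos \<psi>" using cpos by (simp add: abs_mult)
      moreover have "\<bar>cos \<alpha> * sin \<psi>\<bar> = \<bar>cos \<alpha>\<bar> * s" by (simp add: abs_mult s_def)
      ultimately show ?thesis using \<open>sin (\<alpha> - \<psi>) = _\<close> by simp
    qed
    moreover have "\<bar>cos \<alpha>\<bar> * s \<le> s" using s by (simp add: mult_left_le_one_le)
    moreover have "\<bar>sin \<alpha>\<bar> * cos \<psi> \<ge> 3 / (2 * real q) * (143/144)"
      using sa c by (intro mult_mono) auto
    ultimately have "\<bar>sin (\<alpha> - \<psi>)\<bar> \<ge> 3 / (2 * real q) * (143/144) - 1 / (4 * real q)"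
      using s by linarith
    moreover have "3 / (2 * real q) * (143/144) - 1 / (4 * real q) \<ge> 1 / real q"
      using qpos by (simp add: field_simps)
    ultimately have sq: "\<bar>sin (\<alpha> - \<psi>)\<bar> \<ge> 1 / real q" by (meson order_trans)
    then have "(1 / real q)^2 \<le> (sin (\<alpha> - \<psi>))^2"
    proof -
      have "\<bar>1 / real q\<bar> \<le> \<bar>sin (\<alpha> - \<psi>)\<bar>" using sq by simp
      then show ?thesis by (simp only: abs_le_square_iff)
    qed
    then have "\<bar>cos (\<alpha> - \<psi>)\<bar> \<le> 1 - 1 / (2 * real q ^ 2)"
      using abs_cos_le[of "\<alpha> - \<psi>"] by (simp add: power_divide)
    then have "W * \<bar>cos (\<alpha> - \<psi>)\<bar> \<le> 1 - 1 / (2 * real q ^ 2)"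
    proof -
      have "W * \<bar>cos (\<alpha> - \<psi>)\<bar> \<le> \<bar>cos (\<alpha> - \<psi>)\<bar>" using W0 W1 by (intro mult_left_le_one_le) auto
      then show ?thesis using \<open>\<bar>cos (\<alpha> - \<psi>)\<bar> \<le> _\<close> by linarith
    qed
    then show ?thesis using small by linarith
  qed
qed


lemma pi_sq_le: "pi^2 \<le> 16"
proof -
  have "pi^2 \<le> 4^2" using pi_less_4 by (intro power_mono) auto
  then show ?thesis by simp
qed

lemma Ck_ge:
  assumes "k \<ge> 3"
  shows "Ck k \<ge> real k ^ 3"
proof -
  define P where "P = {p::nat. prime p \<and> p \<le> k ^ 6}"
  have fin: "finite P" unfolding P_def by (rule finite_subset[of _ "{..k^6}"]) auto
  have "(5::nat) \<le> 3^6" by simp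
  also have "\<dots> \<le> k^6" using assms by (intro power_mono) auto
  finally have "{2,3,5} \<subseteq> P" using assms unfolding P_def
    by (auto intro: order_trans[of _ "3^6"] simp: power_mono)
  then have "card {2::nat,3,5} \<le> card P" using fin by (intro card_mono) auto
  then have c3: "3 \<le> card P" by simp
  have "Ck k = real k ^ card P" using assms by (simp add: Ck_def P_def)
  moreover have "real k ^ 3 \<le> real k ^ card P" using c3 assms by (intro power_increasing) auto
  ultimately show ?thesis by simp
qed

lemma delta_bounds:
  assumes "k \<ge> 2"
  shows "delta_k k \<le> 1 / (16000 * real k ^ 9)" "delta_k k \<le> 1 / (real k ^ 5 * 2 ^ (2*k+11))"
proof -
  have dle: "delta_k k \<le> 16 / (2 ^ (2 * k + 3) * Ck k ^ (2 * k))"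
    unfolding delta_k_def using pi_sq_le
    by (intro divide_right_mono) (auto simp: Ck_def intro!: mult_nonneg_nonneg zero_le_power prod_nonneg)
  have "delta_k k \<le> 1 / (16000 * real k ^ 9) \<and> delta_k k \<le> 1 / (real k ^ 5 * 2 ^ (2*k+11))"
  proof (cases "k = 2")
    case True
    have "delta_k k \<le> 16 / (2 ^ 7 * 128 ^ 4)" using dle True by (simp add: Ck_def)
    then show ?thesis using True by simp
  next
    case False
    then have k3: "k \<ge> 3" using assms by simp
    have kpos: "real k > 0" using assms by simp
    have "real k ^ 3 \<le> Ck k" by (rule Ck_ge[OF k3])
    then have "(real k ^ 3) ^ (2*k) \<le> Ck k ^ (2*k)" by (intro power_mono) auto
    then have Ckp: "real k ^ (6*k) \<le> Ck k ^ (2*k)" by (simp add: power_mult[symmetric])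
    define A where "A = 2 ^ (2 * k + 3) * real k ^ (6*k)"
    have Apos: "A > 0" using kpos by (simp add: A_def)
    have dA: "delta_k k \<le> 16 / A"
    proof -
      have "2 ^ (2 * k + 3) * real k ^ (6*k) \<le> 2 ^ (2 * k + 3) * Ck k ^ (2 * k)"
        using Ckp by (intro mult_left_mono) auto
      moreover have "0 < Ck k ^ (2 * k)" by (rule less_le_trans[OF zero_less_power[OF kpos] Ckp])
      ultimately have "16 / (2 ^ (2 * k + 3) * Ck k ^ (2 * k)) \<le> 16 / A"
        using Apos unfolding A_def by (intro divide_left_mono) auto
      then show ?thesis using dle by linarith
    qed
    have p2: "(2::real) ^ 9 \<le> 2 ^ (2*k+3)" using k3 by (intro power_increasing) auto
    have p3: "(3::real) ^ m \<le> real k ^ m" for m using k3 by (intro power_mono) auto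
    have e1: "real k ^ (6*k) = real k ^ 9 * real k ^ (6*k-9)"
      using k3 by (simp add: power_add[symmetric])
    have e2: "real k ^ (6*k) = real k ^ 5 * real k ^ (6*k-5)"
      using k3 by (simp add: power_add[symmetric])
    have q1: "(3::real) ^ 9 \<le> real k ^ (6*k-9)"
    proof -
      have "(3::real) ^ 9 \<le> 3 ^ (6*k-9)" using k3 by (intro power_increasing) auto
      then show ?thesis using p3[of "6*k-9"] by linarith
    qed
    have q2: "(3::real) ^ 13 \<le> real k ^ (6*k-5)"
    proof -
      have "(3::real) ^ 13 \<le> 3 ^ (6*k-5)" using k3 by (intro power_increasing) auto
      then show ?thesis using p3[of "6*k-5"] by linarith
    qed
    have A1: "16 * (16000 * real k ^ 9) \<le> A"
    proof -
      have "16 * (16000 * real k ^ 9) \<le> 2 ^ 9 * (3 ^ 9 * real k ^ 9)" using kpos by simp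
      also have "\<dots> \<le> 2 ^ (2*k+3) * (real k ^ (6*k-9) * real k ^ 9)"
        using p2 q1 kpos by (intro mult_mono) auto
      finally show ?thesis unfolding A_def by (subst e1) (simp add: mult_ac)
    qed
    have A2: "16 * (real k ^ 5 * 2 ^ (2*k+11)) \<le> A"
    proof -
      have "16 * (real k ^ 5 * 2 ^ (2*k+11)) = 2 ^ (2*k+3) * (4096 * real k ^ 5)"
        by (simp add: power_add)
      also have "\<dots> \<le> 2 ^ (2*k+3) * (3 ^ 13 * real k ^ 5)" using kpos by simp
      also have "\<dots> \<le> 2 ^ (2*k+3) * (real k ^ (6*k-5) * real k ^ 5)"
        using q2 kpos by (intro mult_left_mono mult_right_mono) auto
      finally show ?thesis unfolding A_def by (subst e2) (simp add: mult_ac)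
    qed
    have "16 / A \<le> 1 / (16000 * real k ^ 9)" using A1 Apos kpos by (simp add: field_simps)
    moreover have "16 / A \<le> 1 / (real k ^ 5 * 2 ^ (2*k+11))" using A2 Apos kpos by (simp add: field_simps)
    ultimately show ?thesis using dA by linarith
  qed
  then show "delta_k k \<le> 1 / (16000 * real k ^ 9)" "delta_k k \<le> 1 / (real k ^ 5 * 2 ^ (2*k+11))"
    by auto
qed


lemma binom_sq_dvd: "(x::int)^2 dvd (1 + x)^k - 1 - int k * x"
proof (induction k)
  case 0 then show ?case by simp
next
  case (Suc k)
  obtain t where t: "(1 + x)^k - 1 - int k * x = x^2 * t" using Suc by (meson dvdE)
  have e: "(1 + x)^k = x^2 * t + 1 + int k * x" using t by (simp add: algebra_simps)
  have "(1 + x)^Suc k - 1 - int (Suc k) * x = x^2 * ((1 + x) * t + int k)"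
    by (simp only: power_Suc e) (simp add: algebra_simps power2_eq_square)
  then show ?case by simp
qed

lemma dvd_all_coprime:
  assumes q1: "q > 1" and H: "\<forall>l\<in>totatives q. int q dvd 2 * (int l ^ k - 1)" and c: "coprime l q"
  shows "int q dvd 2 * (int l ^ k - 1)"
proof -
  have q0: "q \<noteq> 0" using q1 by simp
  have "l mod q \<noteq> 0"
  proof
    assume "l mod q = 0"
    then have "q dvd l" by auto
    then have "q dvd gcd l q" by simp
    then show False using c q1 by simp
  qed
  moreover have "coprime (l mod q) q" using c q0 by (simp add: coprime_mod_left_iff)
  moreover have "l mod q \<le> q" using q0 by (simp add: less_imp_le)
  ultimately have "l mod q \<in> totatives q" by (simp add: in_totatives_iff)
  then have d: "int q dvd 2 * (int (l mod q) ^ k - 1)" using H by blast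
  have "[int (l mod q) ^ k = int l ^ k] (mod int q)"
    by (intro cong_pow) (simp add: of_nat_mod cong_def)
  then have "int q dvd int l ^ k - int (l mod q) ^ k" by (simp add: cong_iff_dvd_diff dvd_diff_commute)
  then have "int q dvd 2 * (int (l mod q) ^ k - 1) + 2 * (int l ^ k - int (l mod q) ^ k)"
    using \<open>int q dvd int l ^ k - int (l mod q) ^ k\<close> by (intro dvd_add d dvd_mult)
  moreover have "2 * (int (l mod q) ^ k - 1) + 2 * (int l ^ k - int (l mod q) ^ k) = 2 * (int l ^ k - 1)"
    by (simp add: algebra_simps)
  ultimately show ?thesis by simp
qed


lemma odd_part_bound:
  assumes k: "k \<ge> 1" and d2: "int m dvd 2 * (int (m+2) ^ k - 1)"
  shows "m \<le> 2 ^ (k+1)"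
proof -
    have "[int (m+2) ^ k = 2 ^ k] (mod int m)"
      by (intro cong_pow) (simp add: cong_def)
    then have "[2 * (int (m+2) ^ k - 1) = 2 * (2 ^ k - 1)] (mod int m)"
      by (intro cong_mult cong_diff) auto
    then have "int m dvd 2 * (2 ^ k - 1)" using d2 by (simp add: cong_dvd_iff)
    moreover have "(0::int) < 2 * (2 ^ k - 1)" using k by simp
    ultimately have "int m \<le> 2 * (2 ^ k - 1)" by (rule zdvd_imp_le)
    then have "int m \<le> int (2 ^ (k+1))" by simp
    then show ?thesis by (simp only: of_nat_le_iff)
qed

lemma cop1:
  fixes m E :: nat assumes modd: "\<not> 2 dvd m"
  shows "coprime (m + 2) (2 ^ E * m)"
proof -
  have "gcd m (1 * m + 2) = gcd m 2" by (rule gcd_add_mult)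
  moreover have "gcd m 2 = 1" using modd odd_imp_coprime_nat[of m] by simp
  ultimately have "gcd (m + 2) m = 1" by (simp only: gcd.commute[of m] mult_1 add.commute[of m])
  then have c1: "coprime (m + 2) m" by (simp only: coprime_iff_gcd_eq_1)
  have c2: "coprime (m + 2) (2 ^ E)" by (rule prime_imp_power_coprime_nat) (use modd in auto)
  show ?thesis unfolding coprime_mult_right_iff using c1 c2 by blast
qed
lemma cop2:
  fixes m E j :: nat assumes modd: "\<not> 2 dvd m" and j: "j \<ge> 1"
  shows "coprime (1 + 2 ^ j * m) (2 ^ E * m)"
proof -
  have "gcd m (2 ^ j * m + 1) = gcd m 1" by (rule gcd_add_mult)
  then have "gcd (1 + 2 ^ j * m) m = 1" by (simp only: gcd.commute[of m] add.commute[of 1] gcd_1_nat)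
  then have c1: "coprime (1 + 2 ^ j * m) m" by (simp only: coprime_iff_gcd_eq_1)
  have c2: "coprime (1 + 2 ^ j * m) (2 ^ E)" by (rule prime_imp_power_coprime_nat) (use j in auto)
  show ?thesis unfolding coprime_mult_right_iff using c1 c2 by blast
qed

lemma cancel2: "(2::int) * a dvd 2 * b \<Longrightarrow> a dvd b" by simp

lemma two_part_bound:
  fixes m E k :: nat
  assumes k: "k \<ge> 1" and modd: "\<not> 2 dvd m" and False: "\<not> E \<le> 1"
    and d1: "int (2 ^ E * m) dvd 2 * (int (1 + 2 ^ (E div 2) * m) ^ k - 1)"
  shows "(2::nat) ^ E \<le> 4 * k ^ 2"
proof -
    define j where "j = E div 2"
    have j1: "j \<ge> 1" "2 * j \<le> E" "E - 1 \<le> 2 * j" using False by (auto simp: j_def)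
    define l2 where "l2 = 1 + 2 ^ j * m"
    have d1': "int (2 ^ E * m) dvd 2 * (int l2 ^ k - 1)" using d1 by (simp add: l2_def j_def)
    have "(2::int) ^ E dvd int (2 ^ E * m)" by simp
    then have d0: "(2::int) ^ E dvd 2 * (int l2 ^ k - 1)" using d1' by (rule dvd_trans)
    have "E = Suc (E - 1)" using False by simp
    then have "(2::int) ^ E = 2 * 2 ^ (E - 1)" by (metis power_Suc)
    then have "(2::int) * 2 ^ (E - 1) dvd 2 * (int l2 ^ k - 1)" using d0 by simp
    then have d2: "(2::int) ^ (E - 1) dvd int l2 ^ k - 1" by (rule cancel2)
    define x where "x = (2::int) ^ j * int m"
    have lx: "int l2 = 1 + x" by (simp add: l2_def x_def)
    have "(2::int) ^ (E - 1) dvd 2 ^ (2*j)" using j1 by (simp add: le_imp_power_dvd)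
    also have "\<dots> dvd x^2"
    proof -
      have "x^2 = 2 ^ (2*j) * (int m)^2" unfolding x_def by (simp add: power_mult_distrib power_even_eq)
      then show ?thesis by simp
    qed
    also have "\<dots> dvd int l2 ^ k - 1 - int k * x" using binom_sq_dvd[of x k] by (simp add: lx)
    finally have X: "(2::int) ^ (E - 1) dvd int l2 ^ k - 1 - int k * x" .
    have "(2::int) ^ (E - 1) dvd (int l2 ^ k - 1) - (int l2 ^ k - 1 - int k * x)"
      by (rule dvd_diff[OF d2 X])
    moreover have "(2::int) ^ (E - 1) = 2 ^ j * 2 ^ (E - 1 - j)"
      using j1 by (simp flip: power_add)
    moreover have "(int l2 ^ k - 1) - (int l2 ^ k - 1 - int k * x) = 2 ^ j * (int k * int m)"
      by (simp add: x_def)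
    ultimately have "(2::int) ^ j * 2 ^ (E - 1 - j) dvd 2 ^ j * (int k * int m)"
      by simp
    then have "(2::int) ^ (E - 1 - j) dvd int k * int m" by simp
    moreover have "coprime ((2::int) ^ (E - 1 - j)) (int m)"
      using modd by (simp add: coprime_power_left_iff)
    ultimately have "(2::int) ^ (E - 1 - j) dvd int k"
      by (simp add: coprime_dvd_mult_left_iff)
    then have "(2::int) ^ (E - 1 - j) \<le> int k" using k by (intro zdvd_imp_le) auto
    then have "int (2 ^ (E - 1 - j)) \<le> int k" by simp
    then have kb: "(2::nat) ^ (E - 1 - j) \<le> k" by (simp only: of_nat_le_iff)
    have "(2::nat) ^ E \<le> 2 ^ (2 * (E - 1 - j) + 2)" using j1 by (intro power_increasing) auto
    also have "\<dots> = 4 * (2 ^ (E - 1 - j))^2" by (simp add: power_add power_mult[symmetric] mult.commute)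
    also have "\<dots> \<le> 4 * k ^ 2" using kb by (intro mult_left_mono power_mono) auto
    finally show ?thesis .
qed

lemma caseA_q_bound:
  assumes k: "k \<ge> 1" and q: "q > 2" and H: "\<forall>l\<in>totatives q. int q dvd 2 * (int l ^ k - 1)"
  shows "real q \<le> real k ^ 2 * 2 ^ (k+3)"
proof -
  have H': "int q dvd 2 * (int l ^ k - 1)" if "coprime l q" for l
    using dvd_all_coprime[of q k l] q H that by simp
  define E where "E = multiplicity 2 q"
  obtain m where qm: "q = 2 ^ E * m" and modd: "\<not> 2 dvd m"
    using multiplicity_decompose'[of q 2] q unfolding E_def by auto
  have mb: "m \<le> 2 ^ (k+1)"
  proof -
    have "int q dvd 2 * (int (m+2) ^ k - 1)" by (rule H'[OF cop1[OF modd, of E, folded qm]])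
    moreover have "int m dvd int q" unfolding qm by simp
    ultimately have "int m dvd 2 * (int (m+2) ^ k - 1)" by (meson dvd_trans)
    then show ?thesis using odd_part_bound k by blast
  qed
  have eb: "(2::nat) ^ E \<le> 4 * k ^ 2"
  proof (cases "E \<le> 1")
    case True
    then have "(2::nat) ^ E \<le> 2 ^ 1" by (intro power_increasing) auto
    also have "\<dots> \<le> 4 * k ^ 2" using k by (simp add: one_le_power)
    finally show ?thesis .
  next
    case False
    have "E div 2 \<ge> 1" using False by auto
    then have "int q dvd 2 * (int (1 + 2 ^ (E div 2) * m) ^ k - 1)" by (rule H'[OF cop2[OF modd _, of "E div 2" E, folded qm]])
    then show ?thesis using two_part_bound[OF k modd False] qm by simp
  qed
  have "q \<le> 4 * k ^ 2 * 2 ^ (k+1)" unfolding qm using eb mb by (intro mult_mono) auto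
  also have "\<dots> = k ^ 2 * 2 ^ (k+3)" by (simp add: power_add)
  finally have "q \<le> k ^ 2 * 2 ^ (k+3)" .
  then have "real q \<le> real (k ^ 2 * 2 ^ (k+3))" by (simp only: of_nat_le_iff)
  then show ?thesis by simp
qed


definition GS :: "nat \<Rightarrow> nat \<Rightarrow> int \<Rightarrow> complex" where
  "GS k M c = (\<Sum>l\<in>totatives M. ee (c * int l ^ k) M)"

lemma norm_GS_le: "norm (GS k M c) \<le> real (totient M)"
proof -
  have "norm (GS k M c) \<le> (\<Sum>l\<in>totatives M. norm (ee (c * int l ^ k) M))"
    unfolding GS_def by (rule norm_sum)
  also have "\<dots> = real (totient M)" by (simp add: totient_def)
  finally show ?thesis .
qed

lemma ee_eq_1_imp: assumes "d > 0" "ee y d = 1" shows "int d dvd y"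
proof -
  from assms(2) obtain n where n: "2 * pi * (real_of_int y / real d) = real_of_int (2 * n) * pi"
    unfolding ee_def exp_eq_1 by auto
  then have "real_of_int y = real d * real_of_int n" using assms(1) by (simp add: field_simps)
  then have "y = int d * n" by (metis of_int_eq_iff of_int_mult of_int_of_nat_eq)
  then show ?thesis by simp
qed

lemma ee_pow: "ee (y * int t) d = ee y d ^ t"
proof (induction t)
  case 0 then show ?case by (simp add: ee_def)
next
  case (Suc t)
  have "ee (y * int (Suc t)) d = ee (y * int t + y) d" by (simp add: algebra_simps)
  also have "\<dots> = ee (y * int t) d * ee y d" by (rule ee_add)
  finally show ?case using Suc by simp
qed

lemma geom_ee_zero:
  assumes d: "d > 0" and nd: "\<not> int d dvd y"
  shows "(\<Sum>t<d. ee (y * int t) d) = 0"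
proof -
  define z where "z = ee y d"
  have z1: "z \<noteq> 1" using ee_eq_1_imp[OF d] nd by (auto simp: z_def)
  have zd: "z ^ d = 1" unfolding z_def using ee_pow[of y d d] ee_multiple[OF d, of y] by (simp add: mult.commute)
  have "(\<Sum>t<d. ee (y * int t) d) = (\<Sum>t<d. z ^ t)" by (simp add: ee_pow z_def)
  also have "\<dots> = 0" using z1 zd by (simp add: sum_gp_strict)
  finally show ?thesis .
qed

lemma tot_mult_bij:
  assumes M: "M > 1" and u: "coprime u M"
  shows "bij_betw (\<lambda>v. v * u mod M) (totatives M) (totatives M)"
proof -
  have sub: "(\<lambda>v. v * u mod M) ` totatives M \<subseteq> totatives M"
  proof
    fix x assume "x \<in> (\<lambda>v. v * u mod M) ` totatives M"
    then obtain v where v: "v \<in> totatives M" "x = v * u mod M" by auto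
    have cv: "coprime v M" using v by (simp add: in_totatives_iff)
    have c: "coprime (v * u) M" using cv u by simp
    then have cx: "coprime x M" using M v by (simp add: coprime_mod_left_iff)
    have "x \<noteq> 0"
    proof
      assume "x = 0"
      then have "M dvd v * u" using v by auto
      then have "is_unit M" by (rule coprime_common_divisor[OF c _ dvd_refl])
      then show False using M by simp
    qed
    moreover have "x \<le> M" using v M by simp
    ultimately show "x \<in> totatives M" using cx by (simp add: in_totatives_iff)
  qed
  have inj: "inj_on (\<lambda>v. v * u mod M) (totatives M)"
  proof (rule inj_onI)
    fix x y assume xy: "x \<in> totatives M" "y \<in> totatives M" "x * u mod M = y * u mod M"
    then have "[x * u = y * u] (mod M)" by (simp add: cong_def)
    then have "[x = y] (mod M)" using u by (simp add: cong_mult_rcancel_nat coprime_commute)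
    moreover have "x < M" "y < M" using xy M by (simp_all add: totatives_less)
    ultimately show "x = y" by (simp add: cong_def)
  qed
  have "(\<lambda>v. v * u mod M) ` totatives M = totatives M"
    using sub inj by (intro endo_inj_surj) auto
  then show ?thesis using inj by (simp add: bij_betw_def)
qed

lemma GS_reindex:
  assumes M: "M > 1" and u: "coprime u M"
  shows "GS k M c = (\<Sum>v\<in>totatives M. ee (c * int v ^ k * int u ^ k) M)"
proof -
  have "GS k M c = (\<Sum>v\<in>totatives M. ee (c * int (v * u mod M) ^ k) M)"
    unfolding GS_def using sum.reindex_bij_betw[OF tot_mult_bij[OF M u], of "\<lambda>l. ee (c * int l ^ k) M"]
    by simp
  also have "\<dots> = (\<Sum>v\<in>totatives M. ee (c * int v ^ k * int u ^ k) M)"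
  proof (intro sum.cong refl ee_cong)
    show "0 < M" using M by simp
    fix v
    have "[int (v * u mod M) = int v * int u] (mod int M)" by (simp add: cong_def of_nat_mod)
    then have "[int (v * u mod M) ^ k = (int v * int u) ^ k] (mod int M)" by (rule cong_pow)
    then have "[c * int (v * u mod M) ^ k = c * (int v * int u) ^ k] (mod int M)" by (rule cong_scalar_left)
    then show "[c * int (v * u mod M) ^ k = c * int v ^ k * int u ^ k] (mod int M)"
      by (simp add: power_mult_distrib mult.assoc)
  qed
  finally show ?thesis .
qed


lemma GS_vanish:
  assumes M: "M > 0" and d: "d > 0" and dd: "d * d dvd M" and nd: "\<not> int d dvd c * int k"
  shows "GS k M c = 0"
proof -
  have "d \<noteq> 1" using nd by auto
  then have d1: "d > 1" using d by simp
  have "d * d \<le> M" using dd M by (rule dvd_imp_le)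
  moreover have "d * d > 1" using d1 by (metis less_1_mult)
  ultimately have M1: "M > 1" by simp
  define r where "r = M div d"
  have Mr: "M = d * r" using dd by (auto simp: r_def elim!: dvdE)
  have r0: "r > 0" using M Mr by (cases "r = 0") auto
  have dr: "d dvd r" using dd d unfolding Mr by simp
  then obtain s where s: "r = d * s" by (rule dvdE)
  have Mrr: "M dvd r * r" by (simp add: Mr s)
  have cop: "coprime (1 + r * t) M" for t
  proof -
    have "gcd r (t * r + 1) = gcd r 1" by (rule gcd_add_mult)
    moreover have "t * r + 1 = 1 + r * t" by simp
    ultimately have "gcd r (1 + r * t) = 1" by (metis gcd_1_nat)
    then have "coprime r (1 + r * t)" by (simp only: coprime_iff_gcd_eq_1)
    then have c1: "coprime (1 + r * t) r" by (rule coprime_commute[THEN iffD1])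
    have c2: "coprime (1 + r * t) (r * r)" unfolding coprime_mult_right_iff using c1 by blast
    obtain w where "r * r = M * w" using Mrr by (rule dvdE)
    then have "coprime (1 + r * t) (M * w)" using c2 by simp
    then show ?thesis unfolding coprime_mult_right_iff by blast
  qed
  have cong_u: "[int (1 + r * t) ^ k = 1 + int k * int r * int t] (mod int M)" for t
  proof -
    define x where "x = int r * int t"
    have "x^2 dvd (1 + x)^k - 1 - int k * x" by (rule binom_sq_dvd)
    moreover have "int M dvd x^2"
    proof -
      have "int M dvd int (r * r)" using Mrr by (simp only: of_nat_dvd_iff)
      also have "\<dots> dvd x^2" by (simp add: x_def power2_eq_square mult_ac)
      finally show ?thesis .
    qed
    ultimately have "int M dvd (1 + x)^k - 1 - int k * x" by (rule dvd_trans[rotated])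
    then show ?thesis by (simp add: cong_iff_dvd_diff x_def algebra_simps)
  qed
  have trm: "ee (c * int v ^ k * int (1 + r * t) ^ k) M = ee (c * int v ^ k) M * ee (c * int v ^ k * int k * int t) d" for v t
  proof -
    have "[c * int v ^ k * int (1 + r * t) ^ k = c * int v ^ k * (1 + int k * int r * int t)] (mod int M)"
      by (intro cong_scalar_left cong_u)
    then have "ee (c * int v ^ k * int (1 + r * t) ^ k) M = ee (c * int v ^ k * (1 + int k * int r * int t)) M"
      using M by (rule ee_cong[rotated])
    also have "\<dots> = ee (c * int v ^ k + (c * int v ^ k * int k * int t) * int r) M"
      by (simp add: algebra_simps)
    also have "\<dots> = ee (c * int v ^ k) M * ee ((c * int v ^ k * int k * int t) * int r) (d * r)"
      by (simp add: ee_add Mr)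
    also have "\<dots> = ee (c * int v ^ k) M * ee (c * int v ^ k * int k * int t) d"
      using r0 by (simp add: ee_scale)
    finally show ?thesis .
  qed
  have each: "GS k M c = (\<Sum>v\<in>totatives M. ee (c * int v ^ k) M * ee ((c * int v ^ k * int k) * int t) d)" for t
    using GS_reindex[OF M1 cop[of t], of k c] trm by simp
  have "of_nat d * GS k M c = (\<Sum>t<d. GS k M c)" by simp
  also have "\<dots> = (\<Sum>t<d. \<Sum>v\<in>totatives M. ee (c * int v ^ k) M * ee ((c * int v ^ k * int k) * int t) d)"
    using each by simp
  also have "\<dots> = (\<Sum>v\<in>totatives M. ee (c * int v ^ k) M * (\<Sum>t<d. ee ((c * int v ^ k * int k) * int t) d))"
    by (subst sum.swap) (simp add: sum_distrib_left)
  also have "\<dots> = 0"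
  proof (intro sum.neutral ballI)
    fix v assume v: "v \<in> totatives M"
    have "\<not> int d dvd c * int v ^ k * int k"
    proof
      assume a: "int d dvd c * int v ^ k * int k"
      have "coprime v M" using v by (simp add: in_totatives_iff)
      then have "coprime (int v) (int M)" by simp
      moreover have "int d dvd int M" using Mr by simp
      ultimately have "coprime (int v) (int d)" by (meson coprime_divisors dvd_refl)
      then have "coprime (int d) (int v ^ k)" by (simp add: coprime_commute)
      moreover have "int d dvd int v ^ k * (c * int k)" using a by (simp add: mult_ac)
      ultimately have "int d dvd c * int k" by (simp add: coprime_dvd_mult_right_iff)
      then show False using nd by simp
    qed
    then show "ee (c * int v ^ k) M * (\<Sum>t<d. ee ((c * int v ^ k * int k) * int t) d) = 0"
      using geom_ee_zero[OF d] by simp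
  qed
  finally show ?thesis using d by simp
qed


lemma ee_mod_pow:
  assumes "m > 0" shows "ee (a * int (l mod m) ^ k) m = ee (a * int l ^ k) m"
proof (rule ee_cong[OF assms])
  have "[int (l mod m) = int l] (mod int m)" by (simp add: cong_def of_nat_mod)
  then have "[int (l mod m) ^ k = int l ^ k] (mod int m)" by (rule cong_pow)
  then show "[a * int (l mod m) ^ k = a * int l ^ k] (mod int m)" by (rule cong_scalar_left)
qed

lemma GS_crt:
  assumes m1: "m1 > 1" and m2: "m2 > 1" and cop: "coprime m1 m2"
  obtains u w where "GS k (m1 * m2) c = GS k m1 (c * u) * GS k m2 (c * w)" "coprime u (int m1)"
proof -
  obtain u w where uw0: "u * int m2 + w * int m1 = gcd (int m2) (int m1)" using bezout_int by blast
  have "gcd (int m2) (int m1) = 1" using cop by (simp add: coprime_commute)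
  then have uw: "u * int m2 + w * int m1 = 1" using uw0 by simp
  have cu: "coprime u (int m1)"
  proof (rule coprimeI)
    fix d assume "d dvd u" "d dvd int m1"
    then have "d dvd u * int m2 + w * int m1" by simp
    then show "is_unit d" using uw by simp
  qed
  define F where "F x y = ee (c * u * int x ^ k) m1 * ee (c * w * int y ^ k) m2" for x y
  have split: "ee (c * int l ^ k) (m1 * m2) = F (l mod m1) (l mod m2)" for l
  proof -
    have "ee (c * int l ^ k) (m1 * m2) = ee ((c * u * int l ^ k) * int m2 + (c * w * int l ^ k) * int m1) (m1 * m2)"
    proof -
      have "c * int l ^ k = c * int l ^ k * (u * int m2 + w * int m1)" using uw by simp
      also have "\<dots> = (c * u * int l ^ k) * int m2 + (c * w * int l ^ k) * int m1"
        by (simp add: algebra_simps)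
      finally show ?thesis by simp
    qed
    also have "\<dots> = ee (c * u * int l ^ k) m1 * ee (c * w * int l ^ k) m2"
    proof -
      have a: "ee ((c * u * int l ^ k) * int m2) (m1 * m2) = ee (c * u * int l ^ k) m1"
        using m2 by (intro ee_scale) simp
      have b: "ee ((c * w * int l ^ k) * int m1) (m2 * m1) = ee (c * w * int l ^ k) m2"
        using m1 by (intro ee_scale) simp
      show ?thesis unfolding ee_add a using b by (simp only: mult.commute[of m2 m1])
    qed
    also have "ee (c * u * int l ^ k) m1 = ee (c * u * int (l mod m1) ^ k) m1"
      using m1 ee_mod_pow[of m1 "c * u" l k] by simp
    also have "ee (c * w * int l ^ k) m2 = ee (c * w * int (l mod m2) ^ k) m2"
      using m2 ee_mod_pow[of m2 "c * w" l k] by simp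
    finally show ?thesis by (simp add: F_def)
  qed
  have "GS k (m1 * m2) c = (\<Sum>l\<in>totatives (m1 * m2). F (l mod m1) (l mod m2))"
    unfolding GS_def using split by simp
  also have "\<dots> = (\<Sum>p\<in>totatives m1 \<times> totatives m2. F (fst p) (snd p))"
    using sum.reindex_bij_betw[OF bij_betw_totatives[OF m1 m2 cop], of "\<lambda>p. F (fst p) (snd p)"] by simp
  also have "\<dots> = (\<Sum>x\<in>totatives m1. \<Sum>y\<in>totatives m2. F x y)"
    by (simp add: sum.cartesian_product case_prod_beta')
  also have "\<dots> = GS k m1 (c * u) * GS k m2 (c * w)"
    unfolding GS_def F_def by (simp add: sum_product)
  finally show ?thesis using that cu by blast
qed


lemma norm_one_plus_ee:
  assumes M: "M > 0" and nd: "\<not> int M dvd n"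
  shows "norm (1 + ee n M) \<le> 2 - 2 / real M ^ 2"
proof -
  define \<theta> where "\<theta> = pi * real_of_int n / real M"
  have s: "\<bar>sin \<theta>\<bar> \<ge> 3 / (2 * real M)" unfolding \<theta>_def by (rule sin_lower[OF M nd])
  have ee: "ee n M = cis (2 * \<theta>)" by (simp add: ee_cis \<theta>_def mult_ac)
  have "(norm (1 + ee n M))^2 = (1 + cos (2*\<theta>))^2 + (sin (2*\<theta>))^2"
    by (simp add: ee cmod_power2)
  also have "\<dots> = 2 + 2 * cos (2*\<theta>)"
    by (simp add: power2_eq_square algebra_simps sin_squared_eq[of "2*\<theta>", unfolded power2_eq_square])
  also have "\<dots> = 4 - 4 * (sin \<theta>)^2" by (simp add: cos_double_sin)
  also have "\<dots> \<le> 4 - 4 * (3 / (2 * real M))^2"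
  proof -
    have "(3 / (2 * real M))^2 \<le> (sin \<theta>)^2"
    proof -
      have "\<bar>3 / (2 * real M)\<bar> \<le> \<bar>sin \<theta>\<bar>" using s M by simp
      then show ?thesis by (simp only: abs_le_square_iff)
    qed
    then show ?thesis by simp
  qed
  also have "\<dots> \<le> (2 - 2 / real M ^ 2)^2"
    using M by (simp add: power2_eq_square field_simps)
  finally have "(norm (1 + ee n M))^2 \<le> (2 - 2 / real M ^ 2)^2" .
  moreover have "0 \<le> 2 - 2 / real M ^ 2"
  proof -
    have "1 \<le> real M ^ 2" using M by (simp add: one_le_power)
    then have "2 / real M ^ 2 \<le> 2" by (simp add: divide_le_eq)
    then show ?thesis by simp
  qed
  ultimately show ?thesis by (rule power2_le_imp_le)
qed

lemma GS_pair:
  assumes M: "M > 0" and v0: "v0 \<in> totatives M" and nd: "\<not> int M dvd c * (int v0 ^ k - 1)"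
  shows "norm (GS k M c) \<le> real (totient M) - 2 / real M ^ 2"
proof -
  have M1: "M \<noteq> 1" using nd by auto
  have v01: "v0 \<noteq> 1" using nd by auto
  have one: "1 \<in> totatives M" using M by simp
  define T where "T = totatives M - {1, v0}"
  have fin: "finite T" by (simp add: T_def)
  have cardT: "card T = totient M - 2"
    using v0 one v01 by (simp add: T_def totient_def card_Diff_subset)
  have tot2: "totient M \<ge> 2"
  proof -
    have "{1, v0} \<subseteq> totatives M" using v0 one by auto
    then have "card {1, v0} \<le> totient M" unfolding totient_def by (intro card_mono) auto
    then show ?thesis using v01 by simp
  qed
  have "GS k M c = ee (c * int 1 ^ k) M + ee (c * int v0 ^ k) M + (\<Sum>l\<in>T. ee (c * int l ^ k) M)"
  proof -
    have "totatives M = insert 1 (insert v0 T)" using v0 one by (auto simp: T_def)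
    moreover have "1 \<notin> insert v0 T" "v0 \<notin> T" using v01 by (auto simp: T_def)
    ultimately show ?thesis unfolding GS_def using fin by (simp add: add.assoc)
  qed
  moreover have "ee (c * int 1 ^ k) M + ee (c * int v0 ^ k) M = ee c M * (1 + ee (c * (int v0 ^ k - 1)) M)"
  proof -
    have "ee (c * int v0 ^ k) M = ee (c + c * (int v0 ^ k - 1)) M" by (simp add: algebra_simps)
    also have "\<dots> = ee c M * ee (c * (int v0 ^ k - 1)) M" by (rule ee_add)
    finally have e: "ee (c * int v0 ^ k) M = ee c M * ee (c * (int v0 ^ k - 1)) M" .
    show ?thesis unfolding e by (simp add: algebra_simps)
  qed
  ultimately have "norm (GS k M c) \<le> norm (ee c M * (1 + ee (c * (int v0 ^ k - 1)) M)) + norm (\<Sum>l\<in>T. ee (c * int l ^ k) M)"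
    by (simp add: norm_triangle_ineq)
  also have "\<dots> \<le> (2 - 2 / real M ^ 2) + real (card T)"
  proof (rule add_mono)
    show "norm (ee c M * (1 + ee (c * (int v0 ^ k - 1)) M)) \<le> 2 - 2 / real M ^ 2"
      using norm_one_plus_ee[OF M nd] by (simp add: norm_mult)
    have "norm (\<Sum>l\<in>T. ee (c * int l ^ k) M) \<le> (\<Sum>l\<in>T. norm (ee (c * int l ^ k) M))" by (rule norm_sum)
    then show "norm (\<Sum>l\<in>T. ee (c * int l ^ k) M) \<le> real (card T)" by simp
  qed
  also have "\<dots> = real (totient M) - 2 / real M ^ 2" using cardT tot2 by (simp add: of_nat_diff)
  finally show ?thesis .
qed


lemma fiber_bound:
  assumes p: "prime p" and k: "k > 0" and nd: "\<not> int p dvd c"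
  shows "card {v \<in> totatives p. (c * int v ^ k) mod int p = int r} \<le> k"
proof -
  have "prime (int p)" using p by simp
  then have "coprime (int p) c" using nd by (rule prime_imp_coprime)
  then have cp: "coprime c (int p)" by (simp add: coprime_commute)
  obtain ci where ci: "[c * ci = 1] (mod int p)" using cong_solve_coprime_int[OF cp] by blast
  define r' where "r' = nat ((int r * ci) mod int p)"
  have r': "int r' = (int r * ci) mod int p" using p by (simp add: r'_def prime_gt_0_nat)
  have p1: "p > 1" using prime_gt_1_nat[OF p] by simp
  have "{v \<in> totatives p. (c * int v ^ k) mod int p = int r} \<subseteq> {x \<in> {..<p}. [x ^ k = r'] (mod p)}"
  proof safe
    fix v assume v: "v \<in> totatives p" and e: "(c * int v ^ k) mod int p = int r"
    show "v < p" using v p1 by (rule totatives_less)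
    have "int r mod int p = int r" using e by (metis mod_mod_trivial)
    then have "[c * int v ^ k = int r] (mod int p)" using e by (simp add: cong_def)
    then have "[ci * (c * int v ^ k) = ci * int r] (mod int p)" by (rule cong_scalar_left)
    moreover have "[ci * (c * int v ^ k) = int v ^ k] (mod int p)"
    proof -
      have "[(c * ci) * int v ^ k = 1 * int v ^ k] (mod int p)" using ci by (rule cong_scalar_right)
      then show ?thesis by (simp add: mult_ac)
    qed
    ultimately have "[int v ^ k = ci * int r] (mod int p)" by (meson cong_sym cong_trans)
    moreover have "[ci * int r = int r'] (mod int p)" by (simp add: r' cong_def mult.commute)
    ultimately have "[int v ^ k = int r'] (mod int p)" by (rule cong_trans)
    then have "[int (v ^ k) = int r'] (mod int p)" by simp
    then show "[v ^ k = r'] (mod p)" by (simp only: cong_int_iff)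
  qed
  then have "card {v \<in> totatives p. (c * int v ^ k) mod int p = int r} \<le> card {x \<in> {..<p}. [x ^ k = r'] (mod p)}"
    by (intro card_mono) auto
  also have "\<dots> \<le> k" by (rule roots_mod_prime_bound[OF p k])
  finally show ?thesis .
qed

lemma unit_re:
  fixes u \<eta> :: complex assumes "norm u = 1" "norm \<eta> = 1"
  shows "Re (u * cnj \<eta>) = 1 - (norm (u - \<eta>))^2 / 2"
proof -
  have u: "(Re u)^2 + (Im u)^2 = 1" using assms(1) by (simp add: cmod_power2[symmetric])
  have e: "(Re \<eta>)^2 + (Im \<eta>)^2 = 1" using assms(2) by (simp add: cmod_power2[symmetric])
  have n: "(norm (u - \<eta>))^2 = (Re u - Re \<eta>)^2 + (Im u - Im \<eta>)^2" by (simp add: cmod_power2)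
  show ?thesis unfolding n using u e by (simp add: power2_eq_square algebra_simps; simp add: field_simps)
qed

lemma norm_ee_minus_1:
  assumes "p > 0" "0 \<le> x" "x \<le> p"
  shows "(norm (ee (int x) p - 1))^2 = 4 * (sin (pi * real x / real p))^2"
proof -
  define \<theta> where "\<theta> = pi * real x / real p"
  have "ee (int x) p = cis (2 * \<theta>)" by (simp add: ee_cis \<theta>_def mult_ac)
  then have "(norm (ee (int x) p - 1))^2 = (cos (2*\<theta>) - 1)^2 + (sin (2*\<theta>))^2"
    by (simp add: cmod_power2)
  also have "\<dots> = 2 - 2 * cos (2*\<theta>)"
    by (simp add: power2_eq_square algebra_simps sin_squared_eq[of "2*\<theta>", unfolded power2_eq_square])
  also have "\<dots> = 4 * (sin \<theta>)^2" by (simp add: cos_double_sin)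
  finally show ?thesis by (simp add: \<theta>_def)
qed

lemma arc_count:
  fixes \<eta> :: complex
  assumes p: "p > 0" and D: "2 * D < p"
  defines "\<rho> \<equiv> 3 * (real D + 1) / (2 * real p)"
  shows "card {r \<in> {..<p}. norm (ee (int r) p - \<eta>) < \<rho>} \<le> 2 * D + 1"
proof (cases "{r \<in> {..<p}. norm (ee (int r) p - \<eta>) < \<rho>} = {}")
  case True then show ?thesis by (metis card.empty le0)
next
  case False
  define R where "R = {r \<in> {..<p}. norm (ee (int r) p - \<eta>) < \<rho>}"
  obtain r0 where r0: "r0 \<in> R" using False unfolding R_def by blast
  define g where "g r = (r + p - r0) mod p" for r
  have r0p: "r0 < p" using r0 by (simp add: R_def)
  have inj: "inj_on g R"
  proof (rule inj_onI)
    fix r s assume rs: "r \<in> R" "s \<in> R" "g r = g s"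
    then have "[r + p - r0 = s + p - r0] (mod p)" by (simp add: g_def cong_def)
    then have "[(r + p - r0) + r0 = (s + p - r0) + r0] (mod p)" by (rule cong_add) simp
    then have "[r + p = s + p] (mod p)" using r0p by simp
    then have "[r = s] (mod p)" by (simp add: cong_add_rcancel_nat)
    moreover have "r < p" "s < p" using rs by (auto simp: R_def)
    ultimately show "r = s" by (simp add: cong_def)
  qed
  have sub: "g ` R \<subseteq> {..D} \<union> {p - D..<p}"
  proof
    fix y assume "y \<in> g ` R"
    then obtain r where r: "r \<in> R" "y = g r" by blast
    have yp: "y < p" using r p by (simp add: g_def)
    show "y \<in> {..D} \<union> {p - D..<p}"
    proof (rule ccontr)
      assume "y \<notin> {..D} \<union> {p - D..<p}"
      then have y1: "D + 1 \<le> y" and y2: "D + 1 \<le> p - y" using yp by auto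
      have rp: "r < p" using r by (simp add: R_def)
      have "[int r = int r0 + int y] (mod int p)"
      proof -
        have "[r + p - r0 = y] (mod p)" using r by (simp add: g_def cong_def)
        then have "[(r + p - r0) + r0 = y + r0] (mod p)" by (rule cong_add) simp
        then have "[r + p = y + r0] (mod p)" using r0p by simp
        then have "[r = y + r0] (mod p)" by (metis cong_add_rcancel_nat cong_mod_left mod_add_self2)
        then have "[int r = int (y + r0)] (mod int p)" by (simp only: cong_int_iff)
        then show ?thesis by (simp add: add.commute)
      qed
      then have "ee (int r) p = ee (int r0 + int y) p" by (rule ee_cong[OF p])
      then have eq: "ee (int r) p - ee (int r0) p = ee (int r0) p * (ee (int y) p - 1)"
        by (simp add: ee_add algebra_simps)
      have sJ: "sin (pi * real y / real p) \<ge> 3 * min (real y) (real p - real y) / (2 * real p)"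
        using yp p by (intro sin_J) auto
      have "min (real y) (real p - real y) \<ge> real D + 1" using y1 y2 yp by auto
      then have "3 * (real D + 1) \<le> 3 * min (real y) (real p - real y)" by (rule mult_left_mono) simp
      then have "3 * min (real y) (real p - real y) / (2 * real p) \<ge> \<rho>"
        using p unfolding \<rho>_def by (intro divide_right_mono) auto
      then have sr: "sin (pi * real y / real p) \<ge> \<rho>" using sJ by linarith
      have rho0: "\<rho> \<ge> 0" unfolding \<rho>_def by simp
      have "(2 * \<rho>)^2 \<le> 4 * (sin (pi * real y / real p))^2"
      proof -
        have "\<rho>^2 \<le> (sin (pi * real y / real p))^2" using sr rho0 by (intro power_mono) auto
        then show ?thesis by (simp add: power_mult_distrib)
      qed
      also have "\<dots> = (norm (ee (int y) p - 1))^2" using p yp by (simp add: norm_ee_minus_1)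
      finally have "2 * \<rho> \<le> norm (ee (int y) p - 1)" by (rule power2_le_imp_le) simp
      also have "\<dots> = norm (ee (int r) p - ee (int r0) p)" by (simp add: eq norm_mult)
      also have "\<dots> \<le> norm (ee (int r) p - \<eta>) + norm (\<eta> - ee (int r0) p)" 
      proof -
        have "ee (int r) p - ee (int r0) p = (ee (int r) p - \<eta>) + (\<eta> - ee (int r0) p)" by simp
        then show ?thesis by (metis norm_triangle_ineq)
      qed
      also have "\<dots> < \<rho> + \<rho>" using r(1) r0 by (intro add_strict_mono) (auto simp: R_def norm_minus_commute)
      finally show False by simp
    qed
  qed
  have "card R = card (g ` R)" using inj by (simp add: card_image)
  also have "\<dots> \<le> card ({..D} \<union> {p - D..<p})" using sub by (intro card_mono) auto
  also have "\<dots> \<le> card {..D} + card {p - D..<p}" by (rule card_Un_le)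
  also have "\<dots> \<le> 2 * D + 1" using D by simp
  finally show ?thesis unfolding R_def .
qed


lemma GS_large_prime:
  assumes p: "prime p" and pk: "4*k+1 < p" and k: "k \<ge> 1" and nd: "\<not> int p dvd c"
  shows "norm (GS k p c) \<le> (1 - 1/(128 * real k^2)) * real (p - 1)"
proof -
  have p1: "p > 1" using prime_gt_1_nat[OF p] by simp
  have p0: "p > 0" using p1 by simp
  have "(1::real) \<le> real k ^ 2" using k by (intro one_le_power) simp
  then have kk: "(1::real) \<le> 128 * real k ^ 2" by linarith
  then have "1/(128 * real k^2) \<le> 1" by (simp add: divide_le_eq)
  then have cpos: "0 \<le> 1 - 1/(128 * real k^2)" by linarith
  define G where "G = GS k p c"
  define N where "N = real (p - 1)"
  have cardtot: "card (totatives p) = p - 1" using p by (simp add: totient_def[symmetric] totient_prime)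
  show ?thesis
  proof (cases "G = 0")
    case True
    then show ?thesis using cpos by (simp add: G_def)
  next
    case False
    define \<eta> where "\<eta> = G / complex_of_real (norm G)"
    have neta: "norm \<eta> = 1" using False by (simp add: \<eta>_def norm_divide)
    define u where "u v = ee (c * int v ^ k) p" for v
    have nu: "norm (u v) = 1" for v by (simp add: u_def)
    have "complex_of_real (norm G) = G * cnj \<eta>"
    proof -
      have "G * cnj \<eta> = G * cnj G / complex_of_real (norm G)" by (simp add: \<eta>_def)
      also have "\<dots> = complex_of_real ((norm G)^2) / complex_of_real (norm G)"
        by (simp only: complex_norm_square)
      also have "\<dots> = complex_of_real (norm G)" using False by (simp add: power2_eq_square)
      finally show ?thesis by simp
    qed
    then have "norm G = Re (G * cnj \<eta>)" by (metis Re_complex_of_real)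
    also have "\<dots> = (\<Sum>v\<in>totatives p. Re (u v * cnj \<eta>))"
      by (simp add: G_def GS_def u_def sum_distrib_right)
    also have "\<dots> = (\<Sum>v\<in>totatives p. 1 - (norm (u v - \<eta>))^2 / 2)"
      by (intro sum.cong refl unit_re nu neta)
    finally have nG: "norm G = (\<Sum>v\<in>totatives p. 1 - (norm (u v - \<eta>))^2 / 2)" .
    define D where "D = (p - 1 - 2*k) div (4*k)"
    define \<rho> where "\<rho> = 3 * (real D + 1) / (2 * real p)"
    have rho0: "\<rho> \<ge> 0" by (simp add: \<rho>_def)
    have D1: "4*k*D \<le> p - 1 - 2*k" unfolding D_def by (metis div_times_less_eq_dividend mult.commute)
    have D2: "p - 1 - 2*k < 4*k*(D+1)"
    proof -
      have "p - 1 - 2*k = 4*k*D + (p - 1 - 2*k) mod (4*k)" by (simp add: D_def)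
      moreover have "(p - 1 - 2*k) mod (4*k) < 4*k" using k by simp
      ultimately show ?thesis by simp
    qed
    have D3: "2 * D < p"
    proof -
      have "4 * D \<le> 4*k*D" using k by simp
      moreover have "p - 1 - 2*k \<le> p" by simp
      ultimately have "4 * D \<le> p" using D1 by linarith
      then show ?thesis using p0 by linarith
    qed
    define B where "B = {v \<in> totatives p. norm (u v - \<eta>) < \<rho>}"
    define R where "R = {r \<in> {..<p}. norm (ee (int r) p - \<eta>) < \<rho>}"
    define F where "F r = {v \<in> totatives p. (c * int v ^ k) mod int p = int r}" for r
    have cardR: "card R \<le> 2 * D + 1" unfolding R_def \<rho>_def by (rule arc_count[OF p0 D3])
    have BF: "B \<subseteq> (\<Union>r\<in>R. F r)"
    proof
      fix v assume v: "v \<in> B"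
      define r where "r = nat ((c * int v ^ k) mod int p)"
      have ir: "int r = (c * int v ^ k) mod int p" using p0 by (simp add: r_def)
      have rp: "r < p" using p0 by (simp add: r_def nat_less_iff)
      have "ee (int r) p = u v" unfolding ir u_def using p0 by (rule ee_mod)
      then have "r \<in> R" using v rp by (simp add: R_def B_def)
      moreover have "v \<in> F r" using v ir by (simp add: F_def B_def)
      ultimately show "v \<in> (\<Union>r\<in>R. F r)" by blast
    qed
    have "(\<Union>r\<in>R. F r) \<subseteq> totatives p" by (auto simp: F_def)
    then have "finite (\<Union>r\<in>R. F r)" by (rule finite_subset) simp
    then have "card B \<le> card (\<Union>r\<in>R. F r)" using BF by (intro card_mono)
    also have "\<dots> \<le> (\<Sum>r\<in>R. card (F r))" by (rule card_UN_le) (simp add: R_def)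
    also have "\<dots> \<le> (\<Sum>r\<in>R. k)" unfolding F_def using p k nd by (intro sum_mono fiber_bound) auto
    also have "\<dots> = k * card R" by simp
    also have "\<dots> \<le> k * (2 * D + 1)" using cardR by (rule mult_left_mono) simp
    finally have cardB: "card B \<le> k * (2 * D + 1)" .
    have Bsub: "B \<subseteq> totatives p" by (auto simp: B_def)
    have "norm G = (\<Sum>v\<in>B. 1 - (norm (u v - \<eta>))^2 / 2) + (\<Sum>v\<in>totatives p - B. 1 - (norm (u v - \<eta>))^2 / 2)"
      unfolding nG using Bsub by (metis (no_types, lifting) finite_totatives sum.subset_diff add.commute)
    also have "\<dots> \<le> (\<Sum>v\<in>B. 1) + (\<Sum>v\<in>totatives p - B. 1 - \<rho>^2 / 2)"
    proof (rule add_mono; rule sum_mono)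
      fix v show "1 - (norm (u v - \<eta>))^2 / 2 \<le> 1" by simp
    next
      fix v assume "v \<in> totatives p - B"
      then have "\<rho> \<le> norm (u v - \<eta>)" by (auto simp: B_def)
      then have "\<rho>^2 \<le> (norm (u v - \<eta>))^2" using rho0 by (intro power_mono) auto
      then show "1 - (norm (u v - \<eta>))^2 / 2 \<le> 1 - \<rho>^2 / 2" by simp
    qed
    also have "\<dots> = real (card B) + real (card (totatives p - B)) * (1 - \<rho>^2 / 2)" by simp
    also have "\<dots> = N - real (card (totatives p - B)) * (\<rho>^2 / 2)"
    proof -
      have "card (totatives p - B) = card (totatives p) - card B" using Bsub by (simp add: card_Diff_subset finite_subset)
      moreover have "card B \<le> card (totatives p)" using Bsub by (intro card_mono) auto
      ultimately have "real (card (totatives p - B)) = N - real (card B)" using cardtot by (simp add: N_def of_nat_diff)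
      then show ?thesis by (simp add: algebra_simps)
    qed
    finally have nG2: "norm G \<le> N - real (card (totatives p - B)) * (\<rho>^2 / 2)" .
    have N1: "real (card (totatives p - B)) \<ge> N / 2"
    proof -
      have "card (totatives p - B) = card (totatives p) - card B" using Bsub by (simp add: card_Diff_subset finite_subset)
      moreover have "2 * (k * (2 * D + 1)) \<le> p - 1"
      proof -
        have "2 * (k * (2 * D + 1)) = 4*k*D + 2*k" by (simp add: algebra_simps)
        then show ?thesis using D1 pk by linarith
      qed
      ultimately have "2 * card (totatives p - B) \<ge> p - 1" using cardB cardtot by linarith
      then have "2 * real (card (totatives p - B)) \<ge> real (p - 1)" by (metis of_nat_le_iff of_nat_mult of_nat_numeral)
      then show ?thesis by (simp add: N_def)
    qed
    have rhob: "\<rho> \<ge> 3 / (16 * real k)"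
    proof -
      have "real (p - 1 - 2*k) < real (4*k*(D+1))" using D2 by (simp only: of_nat_less_iff)
      moreover have "real (p - 1 - 2*k) = real p - 1 - 2 * real k" using pk by (simp add: of_nat_diff)
      ultimately have a: "real p - 1 - 2 * real k < 4 * real k * (real D + 1)" by (simp add: algebra_simps)
      have "real p \<ge> 4 * real k + 2" using pk by linarith
      then have "real p / 2 \<le> 4 * real k * (real D + 1)" using a by linarith
      then have "real p \<le> 8 * real k * (real D + 1)" by linarith
      then have "3 * real p \<le> 3 * (8 * real k * (real D + 1))" by linarith
      then show ?thesis unfolding \<rho>_def using k p0 by (simp add: field_simps)
    qed
    have "\<rho>^2 \<ge> (3 / (16 * real k))^2" using rhob by (intro power_mono) auto
    then have rho2: "\<rho>^2 / 2 \<ge> 9 / (512 * real k^2)" by (simp add: power_divide power_mult_distrib)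
    have N0: "N \<ge> 0" by (simp add: N_def)
    have "real (card (totatives p - B)) * (\<rho>^2 / 2) \<ge> (N / 2) * (9 / (512 * real k^2))"
      using N1 rho2 N0 by (intro mult_mono) auto
    moreover have "(N / 2) * (9 / (512 * real k^2)) \<ge> N * (1 / (128 * real k^2))"
      using N0 k by (simp add: field_simps)
    ultimately have "norm G \<le> N - N * (1 / (128 * real k^2))" using nG2 by linarith
    then show ?thesis by (simp add: G_def N_def algebra_simps)
  qed
qed



lemma T_key:
  assumes k2: "k \<ge> 2" and p: "prime p" and e1: "e \<ge> 1" and Mq: "p ^ e dvd q" and q0: "q > 0"
      and ca: "coprime a (int q)" and l0: "l0 \<in> totatives q"
      and ndX: "\<not> int (p ^ e) dvd 2 * (int l0 ^ k - 1)"
      and star: "\<forall>d>0. d * d dvd q \<longrightarrow> int d dvd 2 * a * int k"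
      and cu: "coprime u (int (p ^ e))"
  shows "norm (GS k (p ^ e) (2 * a * u)) \<le> (1 - 1/(4000 * real k ^ 9)) * real (totient (p ^ e))"
proof -
  define M where "M = p ^ e"
  have p1: "p > 1" using prime_gt_1_nat[OF p] by simp
  have M1: "M > 1" unfolding M_def using p1 e1 by (intro one_less_power) auto
  have intp: "prime (int p)" using p by simp
  have caM: "coprime a (int M)"
  proof -
    have "int M dvd int q" using Mq unfolding M_def by (simp only: of_nat_dvd_iff)
    then show ?thesis by (rule coprime_divisors[OF dvd_refl _ ca])
  qed
  have pa: "\<not> int p dvd a"
  proof
    assume "int p dvd a"
    moreover have "int p dvd int M" using e1 by (simp add: M_def dvd_power)
    ultimately have "is_unit (int p)" by (rule coprime_common_divisor[OF caM])
    then show False using p1 by simp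
  qed
  have pu: "\<not> int p dvd u"
  proof
    assume "int p dvd u"
    moreover have "int p dvd int M" using e1 by (simp add: M_def dvd_power)
    ultimately have "is_unit (int p)" by (rule coprime_common_divisor[OF cu[folded M_def]])
    then show False using p1 by simp
  qed
  have c0le: "1/(4000 * real k ^ 9) \<le> 1"
  proof -
    have "(1::real) \<le> real k ^ 9" using k2 by (intro one_le_power) simp
    then show ?thesis by (simp add: divide_le_eq)
  qed
  show ?thesis
  proof (cases "4*k+1 < p")
    case True
    have e_1: "e = 1"
    proof (rule ccontr)
      assume "e \<noteq> 1"
      then have "2 \<le> e" using e1 by simp
      then have "p ^ 2 dvd p ^ e" by (rule le_imp_power_dvd)
      then have "p * p dvd p ^ e" by (simp add: power2_eq_square)
      then have "p * p dvd q" using Mq by (rule dvd_trans)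
      then have "int p dvd 2 * a * int k" using star p1 by auto
      then have "int p dvd 2 \<or> int p dvd a \<or> int p dvd int k" using intp by (simp add: prime_dvd_mult_iff)
      then have "int p dvd 2 * int k" using pa by auto
      then have "int p dvd int (2 * k)" by simp
      then have "p dvd 2 * k" by (simp only: of_nat_dvd_iff)
      then have "p \<le> 2 * k" using k2 by (intro dvd_imp_le) auto
      then show False using True by simp
    qed
    have "\<not> int p dvd 2 * a * u"
    proof
      assume "int p dvd 2 * a * u"
      then have "int p dvd 2 \<or> int p dvd a \<or> int p dvd u" using intp by (simp add: prime_dvd_mult_iff)
      moreover have "\<not> int p dvd 2"
      proof
        assume "int p dvd 2"
        then have "int p dvd int 2" by simp
        then have "p dvd 2" by (simp only: of_nat_dvd_iff)
        then have "p \<le> 2" by (intro dvd_imp_le) auto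
        then show False using True k2 by simp
      qed
      ultimately show False using pa pu by blast
    qed
    then have "norm (GS k p (2 * a * u)) \<le> (1 - 1/(128 * real k^2)) * real (p - 1)"
      using GS_large_prime[OF p True] k2 by simp
    moreover have "1/(4000 * real k ^ 9) \<le> 1/(128 * real k^2)"
    proof -
      have "real k ^ 2 \<le> real k ^ 9" using k2 by (intro power_increasing) auto
      moreover have "0 \<le> real k ^ 2" by simp
      ultimately have "128 * real k ^ 2 \<le> 4000 * real k ^ 9" by linarith
      then show ?thesis using k2 by (intro divide_left_mono) auto
    qed
    ultimately have "norm (GS k p (2 * a * u)) \<le> (1 - 1/(4000 * real k ^ 9)) * real (p - 1)"
    proof -
      have "(1 - 1/(128 * real k^2)) * real (p - 1) \<le> (1 - 1/(4000 * real k ^ 9)) * real (p - 1)"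
        using \<open>1/(4000 * real k ^ 9) \<le> 1/(128 * real k^2)\<close> by (intro mult_right_mono) auto
      then show ?thesis using \<open>norm (GS k p (2 * a * u)) \<le> _\<close> by linarith
    qed
    then show ?thesis using e_1 p by (simp add: totient_prime)
  next
    case False
    define j where "j = e div 2"
    have "p ^ j * p ^ j dvd M" unfolding M_def j_def by (simp add: le_imp_power_dvd flip: power_add)
    then have "p ^ j * p ^ j dvd q" using Mq by (simp add: M_def dvd_trans)
    moreover have "p ^ j > 0" using p1 by simp
    ultimately have "int (p ^ j) dvd 2 * a * int k" using star by blast
    moreover have "coprime (int (p ^ j)) a"
    proof (cases "j = 0")
      case True then show ?thesis by simp
    next
      case False
      have "coprime (int p) a" using pa intp by (simp add: prime_imp_coprime)
      then show ?thesis by (simp add: coprime_power_left_iff)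
    qed
    moreover have "2 * a * int k = a * (2 * int k)" by simp
    ultimately have "int (p ^ j) dvd a * (2 * int k)" "coprime (int (p ^ j)) a" by simp_all
    then have "int (p ^ j) dvd 2 * int k" by (simp add: coprime_dvd_mult_right_iff)
    then have "int (p ^ j) dvd int (2 * k)" by simp
    then have "p ^ j dvd 2 * k" by (simp only: of_nat_dvd_iff)
    then have pj: "p ^ j \<le> 2 * k" using k2 by (intro dvd_imp_le) auto
    have "M \<le> p ^ (2 * j + 1)" unfolding M_def j_def using p1 by (intro power_increasing) auto
    also have "\<dots> = p ^ j * p ^ j * p" by (simp add: power_add power_mult[symmetric] mult_2)
    also have "\<dots> \<le> (2 * k) * (2 * k) * (4 * k + 1)" using pj False by (intro mult_mono) auto
    also have "\<dots> \<le> 20 * k ^ 3" using k2 by (simp add: power3_eq_cube algebra_simps)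
    finally have Mb: "M \<le> 20 * k ^ 3" .
    define v0 where "v0 = l0 mod M"
    have cl0: "coprime l0 q" using l0 by (simp add: in_totatives_iff)
    have cl0M: "coprime l0 M" unfolding M_def by (rule coprime_divisors[OF dvd_refl Mq cl0])
    have v0t: "v0 \<in> totatives M"
    proof -
      have "v0 \<noteq> 0"
      proof
        assume "v0 = 0"
        then have "M dvd l0" by (auto simp: v0_def)
        then have "is_unit M" by (rule coprime_common_divisor[OF cl0M _ dvd_refl])
        then show False using M1 by simp
      qed
      moreover have "coprime v0 M" using cl0M M1 by (simp add: v0_def coprime_mod_left_iff)
      moreover have "v0 \<le> M" using M1 by (simp add: v0_def less_imp_le)
      ultimately show ?thesis by (simp add: in_totatives_iff)
    qed
    have ndv: "\<not> int M dvd (2 * a * u) * (int v0 ^ k - 1)"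
    proof
      assume a1: "int M dvd (2 * a * u) * (int v0 ^ k - 1)"
      have c1: "coprime (int M) a" using caM by (rule coprime_commute[THEN iffD1])
      have c2: "coprime (int M) u" using cu[folded M_def] by (rule coprime_commute[THEN iffD1])
      have cop: "coprime (int M) (a * u)" using c1 c2 by (simp only: coprime_mult_right_iff)
      have eq: "(2 * a * u) * (int v0 ^ k - 1) = (a * u) * (2 * (int v0 ^ k - 1))" by simp
      have "int M dvd 2 * (int v0 ^ k - 1)"
        using a1[unfolded eq] coprime_dvd_mult_right_iff[OF cop] by blast
      moreover have "[int v0 ^ k = int l0 ^ k] (mod int M)"
        by (intro cong_pow) (simp add: v0_def cong_def of_nat_mod)
      then have "[2 * (int v0 ^ k - 1) = 2 * (int l0 ^ k - 1)] (mod int M)"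
        by (intro cong_scalar_left cong_diff) auto
      ultimately have "int M dvd 2 * (int l0 ^ k - 1)" by (simp add: cong_dvd_iff)
      then show False using ndX by (simp add: M_def)
    qed
    have M0: "M > 0" using M1 by simp
    have "norm (GS k M (2 * a * u)) \<le> real (totient M) - 2 / real M ^ 2"
      by (rule GS_pair[OF M0 v0t ndv])
    moreover have "real (totient M) * (1/(4000 * real k ^ 9)) \<le> 2 / real M ^ 2"
    proof -
      have tM: "real (totient M) \<le> real M" by (simp add: totient_le)
      have "real M ^ 3 \<le> (20 * real k ^ 3) ^ 3"
      proof -
        have "real M \<le> real (20 * k ^ 3)" using Mb by (simp only: of_nat_le_iff)
        then have "real M \<le> 20 * real k ^ 3" by simp
        then show ?thesis by (intro power_mono) auto
      qed
      also have "\<dots> = 8000 * real k ^ 9" by (simp add: power_mult_distrib power_mult[symmetric])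
      finally have M3: "real M ^ 3 \<le> 8000 * real k ^ 9" .
      have kpos: "real k > 0" using k2 by simp
      have "real (totient M) * (1/(4000 * real k ^ 9)) \<le> real M * (1/(4000 * real k ^ 9))"
        using tM by (intro mult_right_mono) auto
      also have "\<dots> \<le> 2 / real M ^ 2"
        using M3 M0 kpos by (simp add: field_simps power3_eq_cube power2_eq_square)
      finally show ?thesis .
    qed
    ultimately show ?thesis by (simp add: M_def algebra_simps)
  qed
qed


lemma T_bound:
  assumes k2: "k \<ge> 2" and q: "q > 2" and ca: "coprime a (int q)" and l0: "l0 \<in> totatives q"
      and nd: "\<not> int q dvd 2 * (int l0 ^ k - 1)"
  shows "norm (GS k q (2*a)) \<le> (1 - 1/(4000 * real k ^ 9)) * real (totient q)"
proof -
  have c0le: "1/(4000 * real k ^ 9) \<le> 1"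
  proof -
    have "(1::real) \<le> real k ^ 9" using k2 by (intro one_le_power) simp
    then show ?thesis by (simp add: divide_le_eq)
  qed
  show ?thesis
  proof (cases "\<exists>d>0. d * d dvd q \<and> \<not> int d dvd 2 * a * int k")
    case True
    then obtain d where d: "d > 0" "d * d dvd q" "\<not> int d dvd 2 * a * int k" by blast
    have "GS k q (2*a) = 0" using q d by (intro GS_vanish) auto
    then show ?thesis using c0le by simp
  next
    case False
    then have star: "\<forall>d>0. d * d dvd q \<longrightarrow> int d dvd 2 * a * int k" by blast
    have l01: "l0 \<ge> 1" using l0 by (simp add: in_totatives_iff)
    then have "1 \<le> l0 ^ k" by (simp add: one_le_power)
    define X where "X = 2 * (l0 ^ k - 1)"
    have iX: "int X = 2 * (int l0 ^ k - 1)" using \<open>1 \<le> l0 ^ k\<close> by (simp add: X_def of_nat_diff)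
    have ndX: "\<not> q dvd X"
    proof
      assume "q dvd X"
      then have "int q dvd int X" by (simp only: of_nat_dvd_iff)
      then show False using nd iX by simp
    qed
    have X0: "X \<noteq> 0"
    proof
      assume "X = 0"
      then have "q dvd X" by simp
      then show False using ndX by simp
    qed
    have q0: "q \<noteq> 0" using q by simp
    have "\<exists>p. prime p \<and> \<not> multiplicity p q \<le> multiplicity p X"
    proof (rule ccontr)
      assume "\<not> (\<exists>p. prime p \<and> \<not> multiplicity p q \<le> multiplicity p X)"
      then have "\<And>p. prime p \<Longrightarrow> multiplicity p q \<le> multiplicity p X" by blast
      then have "q dvd X" by (rule multiplicity_le_imp_dvd[OF q0])
      then show False using ndX by simp
    qed
    then obtain p where p: "prime p" and pm: "\<not> multiplicity p q \<le> multiplicity p X" by blast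
    define e where "e = multiplicity p q"
    have nu: "\<not> is_unit p" using p not_prime_unit by blast
    have npe: "\<not> p ^ e dvd X"
    proof
      assume "p ^ e dvd X"
      then have "e \<le> multiplicity p X" using power_dvd_iff_le_multiplicity[OF X0 nu] by simp
      then show False using pm by (simp add: e_def)
    qed
    have e1: "e \<ge> 1" using npe by (cases e) auto
    have Mq: "p ^ e dvd q" unfolding e_def by (rule multiplicity_dvd)
    have ndX': "\<not> int (p ^ e) dvd 2 * (int l0 ^ k - 1)"
    proof
      assume "int (p ^ e) dvd 2 * (int l0 ^ k - 1)"
      then have "int (p ^ e) dvd int X" using iX by simp
      then show False using npe by (simp only: of_nat_dvd_iff)
    qed
    define r where "r = q div p ^ e"
    have qr: "q = p ^ e * r" using Mq by (simp add: r_def)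
    have pr: "\<not> p dvd r" unfolding r_def e_def by (rule multiplicity_decompose) (use q0 nu in auto)
    have cpr: "coprime (p ^ e) r"
    proof -
      have "coprime r (p ^ e)" using p pr by (rule prime_imp_power_coprime_nat)
      then show ?thesis by (rule coprime_commute[THEN iffD1])
    qed
    have q0': "q > 0" using q by simp
    have key: "norm (GS k (p ^ e) (2 * a * u)) \<le> (1 - 1/(4000 * real k ^ 9)) * real (totient (p ^ e))"
      if "coprime u (int (p ^ e))" for u
      by (rule T_key[OF k2 p e1 Mq q0' ca l0 ndX' star that])
    show ?thesis
    proof (cases "r = 1")
      case True
      then have "q = p ^ e" using qr by simp
      then show ?thesis using key[of 1] by simp
    next
      case False
      have r1: "r > 1" using False qr q by (cases r) auto
      have pe1: "p ^ e > 1" using prime_gt_1_nat[OF p] e1 by (intro one_less_power) auto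
      obtain u w where uw: "GS k (p ^ e * r) (2 * a) = GS k (p ^ e) (2 * a * u) * GS k r (2 * a * w)"
        and cu: "coprime u (int (p ^ e))"
        using GS_crt[OF pe1 r1 cpr] by blast
      have "norm (GS k q (2 * a)) = norm (GS k (p ^ e) (2 * a * u)) * norm (GS k r (2 * a * w))"
        by (simp add: qr uw norm_mult)
      also have "\<dots> \<le> ((1 - 1/(4000 * real k ^ 9)) * real (totient (p ^ e))) * real (totient r)"
        using key[OF cu] norm_GS_le[of k r] c0le by (intro mult_mono) auto
      also have "\<dots> = (1 - 1/(4000 * real k ^ 9)) * real (totient q)"
        using cpr by (simp add: qr totient_mult_coprime)
      finally show ?thesis .
    qed
  qed
qed


lemma abs_cos_add_int_pi: "\<bar>cos (x + pi * of_int m)\<bar> = \<bar>cos x\<bar>"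
  by (simp add: cos_add)

lemma abs_le_sq: "\<bar>c::real\<bar> \<le> (3 + cos_sq) / 4" if "cos_sq = 2 * c^2 - 1" for cos_sq
proof -
  have "0 \<le> (1 - \<bar>c\<bar>)^2" by simp
  then show ?thesis using that by (simp add: power2_eq_square algebra_simps abs_mult_self_eq)
qed

theorem lemma5p2:
  fixes k q :: nat and a :: int and X \<beta> :: real
  assumes "k \<ge> 2" and "X > 0" and "q > 2" and "coprime a (int q)"
  shows "\<bar>Re (Sstar k q a / (1 - 2 * of_real pi * \<i> * of_real \<beta> * of_real X) powr (1 / of_nat k))\<bar>
           \<le> (1 - delta_k k) * real (totient q)"
proof -
  define z where "z = 1 - 2 * of_real pi * \<i> * of_real \<beta> * of_real X"
  have Rez: "Re z = 1" by (simp add: z_def)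
  have k0: "k > 0" using assms(1) by simp
  obtain W \<psi> where repr: "\<And>x. Re (exp (complex_of_real (2*pi) * \<i> * complex_of_real x) / z powr (1 / of_nat k))
          = W * cos (2*pi*x - \<psi>)"
    and W0: "0 < W" and W1: "W \<le> 1" and Wk: "W ^ k = cos (real k * \<psi>)" and kpsi: "\<bar>real k * \<psi>\<bar> < pi/2"
    using main_repr[OF Rez k0] by blast
  define \<theta> where "\<theta> l = 2*pi*(real_of_int (a * int l ^ k) / real q) - \<psi>" for l :: nat
  have tot: "{l\<in>{1..q}. coprime l q} = totatives q" by (auto simp: totatives_def)
  have phi: "real (totient q) = real (card (totatives q))" by (simp add: totient_def)
  have "Re (Sstar k q a / z powr (1 / of_nat k)) = (\<Sum>l\<in>totatives q. W * cos (\<theta> l))"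
    unfolding Sstar_def tot sum_divide_distrib Re_sum by (intro sum.cong refl) (simp only: repr \<theta>_def)
  then have ReS: "\<bar>Re (Sstar k q a / z powr (1 / of_nat k))\<bar> = W * \<bar>\<Sum>l\<in>totatives q. cos (\<theta> l)\<bar>"
    using W0 by (simp add: sum_distrib_left[symmetric] abs_mult)
  have sumabs: "\<bar>\<Sum>l\<in>totatives q. cos (\<theta> l)\<bar> \<le> (\<Sum>l\<in>totatives q. \<bar>cos (\<theta> l)\<bar>)"
    by (rule sum_abs)
  show ?thesis
  proof (cases "\<forall>l\<in>totatives q. int q dvd 2 * (int l ^ k - 1)")
    case True
    have qb: "real q \<le> real k ^ 2 * 2 ^ (k+3)" using caseA_q_bound[OF _ assms(3) True] k0 by simp
    have eq: "\<bar>cos (\<theta> l)\<bar> = \<bar>cos (\<theta> 1)\<bar>" if l: "l \<in> totatives q" for l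
    proof -
      obtain n where n: "2 * (int l ^ k - 1) = int q * n" using True l by (meson dvdE)
      have nr: "2 * real l ^ k - 2 = real q * real_of_int n"
        using arg_cong[OF n, of real_of_int] by simp
      have "\<theta> l = \<theta> 1 + pi * of_int (a * n)"
      proof -
        have "real_of_int (a * int l ^ k) = real_of_int a + real_of_int a * (real_of_int (2 * (int l ^ k - 1)) / 2)"
          by (simp add: field_simps)
        also have "\<dots> = real_of_int a + real_of_int a * real q * real_of_int n / 2" by (simp add: nr)
        finally show ?thesis using assms(3) by (simp add: \<theta>_def field_simps)
      qed
      then show ?thesis by (metis abs_cos_add_int_pi)
    qed
    have "(\<Sum>l\<in>totatives q. \<bar>cos (\<theta> l)\<bar>) = real (totient q) * \<bar>cos (\<theta> 1)\<bar>"
      using eq by (simp add: phi)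
    have ndvd: "\<not> int q dvd 2 * a"
    proof
      assume "int q dvd 2 * a"
      then have "int q dvd 2" using assms(4) by (metis coprime_commute coprime_dvd_mult_left_iff)
      then have "q dvd 2" by presburger
      then show False using assms(3) by (simp add: dvd_imp_le leD)
    qed
    have sa: "\<bar>sin (2*pi*(real_of_int a / real q))\<bar> \<ge> 3 / (2 * real q)"
      using sin_lower[OF _ ndvd] assms(3) by (simp add: mult_ac)
    have th1: "\<theta> 1 = 2*pi*(real_of_int a / real q) - \<psi>" by (simp add: \<theta>_def)
    have trig: "W * \<bar>cos (\<theta> 1)\<bar> \<le> 1 - 1 / (32 * real k * real q ^ 2)"
      unfolding th1 using caseA_trig[OF _ _ W0 W1 Wk kpsi sa] k0 assms(3) by simp
    have "1 / (real k ^ 5 * 2 ^ (2*k+11)) \<le> 1 / (32 * real k * real q ^ 2)"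
    proof -
      have "real q ^ 2 \<le> (real k ^ 2 * 2 ^ (k+3))^2" using qb assms(3) by (intro power_mono) auto
      then have "32 * real k * real q ^ 2 \<le> 32 * real k * (real k ^ 2 * 2 ^ (k+3))^2"
        using k0 by (intro mult_left_mono) auto
      also have "\<dots> = real k ^ 5 * 2 ^ (2*k+11)"
        by (simp add: power_mult_distrib power_add power_mult[symmetric] algebra_simps)
           (simp add: power2_eq_square algebra_simps numeral_eq_Suc)
      finally show ?thesis using k0 assms(3) by (intro divide_left_mono) auto
    qed
    then have "W * \<bar>cos (\<theta> 1)\<bar> \<le> 1 - delta_k k" using trig delta_bounds(2)[OF assms(1)] by linarith
    then have "W * (real (totient q) * \<bar>cos (\<theta> 1)\<bar>) \<le> (1 - delta_k k) * real (totient q)"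
    proof -
      have "W * (real (totient q) * \<bar>cos (\<theta> 1)\<bar>) = real (totient q) * (W * \<bar>cos (\<theta> 1)\<bar>)" by (simp add: mult_ac)
      also have "\<dots> \<le> real (totient q) * (1 - delta_k k)" by (intro mult_left_mono) (fact, simp)
      finally show ?thesis by (simp add: mult_ac)
    qed
    moreover have "W * \<bar>\<Sum>l\<in>totatives q. cos (\<theta> l)\<bar> \<le> W * (real (totient q) * \<bar>cos (\<theta> 1)\<bar>)"
      using sumabs \<open>(\<Sum>l\<in>totatives q. \<bar>cos (\<theta> l)\<bar>) = _\<close> W0 by (intro mult_left_mono) auto
    ultimately show ?thesis using ReS by (simp add: z_def)
  next
    case False
    then obtain l0 where l0: "l0 \<in> totatives q" "\<not> int q dvd 2 * (int l0 ^ k - 1)" by blast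
    have Tb: "norm (GS k q (2*a)) \<le> (1 - 1/(4000 * real k ^ 9)) * real (totient q)"
      using T_bound[OF assms(1,3,4) l0] .
    have c2: "cos (2 * \<theta> l) = Re (cis (- 2 * \<psi>) * ee (2 * a * int l ^ k) q)" for l
    proof -
      have "2 * \<theta> l = - 2 * \<psi> + 2*pi*real_of_int (2 * a * int l ^ k) / real q"
        by (simp add: \<theta>_def algebra_simps)
      then show ?thesis by (simp add: ee_cis cis_mult)
    qed
    have "(\<Sum>l\<in>totatives q. cos (2 * \<theta> l)) = Re (cis (- 2 * \<psi>) * GS k q (2*a))"
      unfolding GS_def c2 sum_distrib_left Re_sum by simp
    also have "\<dots> \<le> norm (cis (- 2 * \<psi>) * GS k q (2*a))" by (rule complex_Re_le_cmod)
    also have "\<dots> = norm (GS k q (2*a))" by (simp add: norm_mult)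
    finally have s2: "(\<Sum>l\<in>totatives q. cos (2 * \<theta> l)) \<le> (1 - 1/(4000 * real k ^ 9)) * real (totient q)"
      using Tb by linarith
    have "(\<Sum>l\<in>totatives q. \<bar>cos (\<theta> l)\<bar>) \<le> (\<Sum>l\<in>totatives q. (3 + cos (2 * \<theta> l)) / 4)"
      by (intro sum_mono abs_le_sq) (simp add: cos_double sin_squared_eq)
    also have "\<dots> = (3 * real (totient q) + (\<Sum>l\<in>totatives q. cos (2 * \<theta> l))) / 4"
      by (simp add: sum_divide_distrib[symmetric] sum.distrib phi)
    also have "\<dots> \<le> (3 * real (totient q) + (1 - 1/(4000 * real k ^ 9)) * real (totient q)) / 4"
      using s2 by (intro divide_right_mono add_left_mono) auto
    also have "\<dots> = (1 - 1/(16000 * real k ^ 9)) * real (totient q)"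
      by (simp add: field_simps)
    also have "\<dots> \<le> (1 - delta_k k) * real (totient q)"
      using delta_bounds(1)[OF assms(1)] by (intro mult_right_mono) auto
    finally have fin: "(\<Sum>l\<in>totatives q. \<bar>cos (\<theta> l)\<bar>) \<le> (1 - delta_k k) * real (totient q)" .
    then have "W * \<bar>\<Sum>l\<in>totatives q. cos (\<theta> l)\<bar> \<le> (1 - delta_k k) * real (totient q)"
    proof -
      have "W * \<bar>\<Sum>l\<in>totatives q. cos (\<theta> l)\<bar> \<le> \<bar>\<Sum>l\<in>totatives q. cos (\<theta> l)\<bar>"
        using W0 W1 by (intro mult_left_le_one_le) auto
      then show ?thesis using sumabs fin by linarith
    qed
    then show ?thesis using ReS by (simp add: z_def)
  qed
qed


end
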